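(* Let $\ell\ge 1$ and $0\le m\le\ell$ be integers, and let all objects be as defined in the context. Let $\hat{\mathcal{M}}_{\ell,m}$ denote the restriction of $\hat{\mathcal{M}}_\ell$ to $\mathcal{V}_{\ell,m}$ (viewed as an operator on $\mathcal{V}_{\ell,m}$). Then for every integer $d\ge 1$, $$\dim\ker(\hat{\mathcal{M}}_{\ell,m})^d-\dim\ker(\hat{\mathcal{M}}_{\ell,m})^{d-1}=\dim\mathcal{V}_{\ell,m}^{\left\lfloor\frac{m(\ell-m)-(d-1)}{2}\right\rfloor},$$ where $(\hat{\mathcal{M}}_{\ell,m})^0$ is the identity.
   Context: Let $\mathcal{F}$ be a complex vector space carrying linear operators $\hat b_1,\dots,\hat b_\ell,\hat b_1',\dots,\hat b_\ell'$ satisfying $\{\hat b_j,\hat b_k\}=\{\hat b_j',\hat b_k'\}=0$ and $\{\hat b_j,\hat b_k'\}=\delta_{jk}$ (with $\{A,B\}=AB+BA$), together with a vector $|\mathrm{right}\rangle$ with $\hat b_k|\mathrm{right}\rangle=0$ for all $k$, such that the $2^\ell$ vectors $(\hat b_1')^{\nu_1}\cdots(\hat b_\ell')^{\nu_\ell}|\mathrm{right}\rangle$, $\nu_k\in\{0,1\}$, form a basis of $\mathcal{F}$. Define $\hat{\mathcal{M}}_\ell=\sum_{k=1}^{\ell-1}\hat b_{k+1}'\hat b_k$, $\hat{\mathcal{N}}_\ell=\sum_{k=1}^\ell \hat b_k'\hat b_k$, $\hat\Omega_\ell=\sum_{k=1}^\ell k\,\hat b_k'\hat b_k-\tfrac12\hat{\mathcal{N}}_\ell(\hat{\mathcal{N}}_\ell+1)$,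 $\mathcal{V}_{\ell,m}=\{\psi:\hat{\mathcal{N}}_\ell\psi=m\psi\}$, and for any integer $r$, $\mathcal{V}_{\ell,m}^r=\{\psi:\hat{\mathcal{N}}_\ell\psi=m\psi,\ \hat\Omega_\ell\psi=r\psi\}$ (which is $\{0\}$ unless $0\le r\le m(\ell-m)$). *)

theory Defs
  imports Complex_Main
begin

text \<open>The abstract space F is a type 'v with addition (ab_group_add) and a complex scalar
multiplication sm, required to form a complex vector space (locale vector_space).\<close>

definition anticomm :: "('v::ab_group_add \<Rightarrow> 'v) \<Rightarrow> ('v \<Rightarrow> 'v) \<Rightarrow> 'v \<Rightarrow> 'v" where
  "anticomm A B = (\<lambda>x. A (B x) + B (A x))"

fun creation_word :: "(nat \<Rightarrow> 'v \<Rightarrow> 'v) \<Rightarrow> (nat \<Rightarrow> bool) \<Rightarrow> nat \<Rightarrow> 'v \<Rightarrow> 'v" where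
  "creation_word b' nu 0 = id"
| "creation_word b' nu (Suc n) = creation_word b' nu n \<circ> (if nu (Suc n) then b' (Suc n) else id)"

text \<open>Occupation patterns nu: {1..l} \<rightarrow> {0,1} encoded as nat \<Rightarrow> bool supported in {1..l}.\<close>
definition occ_patterns :: "nat \<Rightarrow> (nat \<Rightarrow> bool) set" where
  "occ_patterns l = {nu. \<forall>k. nu k \<longrightarrow> k \<in> {1..l}}"

definition fermion_system ::
  "(complex \<Rightarrow> 'v::ab_group_add \<Rightarrow> 'v) \<Rightarrow> nat \<Rightarrow> (nat \<Rightarrow> 'v \<Rightarrow> 'v) \<Rightarrow> (nat \<Rightarrow> 'v \<Rightarrow> 'v) \<Rightarrow> 'v \<Rightarrow> bool" where
  "fermion_system sm l b b' right \<longleftrightarrow>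
     vector_space sm
   \<and> (\<forall>k\<in>{1..l}. Vector_Spaces.linear sm sm (b k) \<and> Vector_Spaces.linear sm sm (b' k))
   \<and> (\<forall>j\<in>{1..l}. \<forall>k\<in>{1..l}. anticomm (b j) (b k) = (\<lambda>_. 0) \<and> anticomm (b' j) (b' k) = (\<lambda>_. 0)
         \<and> anticomm (b j) (b' k) = (\<lambda>x. if j = k then x else 0))
   \<and> (\<forall>k\<in>{1..l}. b k right = 0)
   \<and> inj_on (\<lambda>nu. creation_word b' nu l right) (occ_patterns l)
   \<and> \<not> module.dependent sm ((\<lambda>nu. creation_word b' nu l right) ` occ_patterns l)
   \<and> module.span sm ((\<lambda>nu. creation_word b' nu l right) ` occ_patterns l) = UNIV"

definition numop :: "nat \<Rightarrow> (nat \<Rightarrow> 'v \<Rightarrow> 'v) \<Rightarrow> (nat \<Rightarrow> 'v \<Rightarrow> 'v) \<Rightarrow> 'v::ab_group_add \<Rightarrow> 'v" where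
  "numop l b b' = (\<lambda>x. \<Sum>k=1..l. b' k (b k x))"

definition Mop :: "nat \<Rightarrow> (nat \<Rightarrow> 'v \<Rightarrow> 'v) \<Rightarrow> (nat \<Rightarrow> 'v \<Rightarrow> 'v) \<Rightarrow> 'v::ab_group_add \<Rightarrow> 'v" where
  "Mop l b b' = (\<lambda>x. \<Sum>k=1..l-1. b' (k+1) (b k x))"

definition Omegaop :: "(complex \<Rightarrow> 'v \<Rightarrow> 'v) \<Rightarrow> nat \<Rightarrow> (nat \<Rightarrow> 'v \<Rightarrow> 'v) \<Rightarrow> (nat \<Rightarrow> 'v \<Rightarrow> 'v) \<Rightarrow> 'v::ab_group_add \<Rightarrow> 'v" where
  "Omegaop sm l b b' = (\<lambda>x. (\<Sum>k=1..l. sm (of_nat k) (b' k (b k x)))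
      - sm (1/2) (numop l b b' (numop l b b' x) + numop l b b' x))"

definition Vsp :: "(complex \<Rightarrow> 'v \<Rightarrow> 'v) \<Rightarrow> nat \<Rightarrow> (nat \<Rightarrow> 'v \<Rightarrow> 'v) \<Rightarrow> (nat \<Rightarrow> 'v \<Rightarrow> 'v) \<Rightarrow> nat \<Rightarrow> 'v::ab_group_add set" where
  "Vsp sm l b b' m = {x. numop l b b' x = sm (of_nat m) x}"

definition Vsp_r :: "(complex \<Rightarrow> 'v \<Rightarrow> 'v) \<Rightarrow> nat \<Rightarrow> (nat \<Rightarrow> 'v \<Rightarrow> 'v) \<Rightarrow> (nat \<Rightarrow> 'v \<Rightarrow> 'v) \<Rightarrow> nat \<Rightarrow> int \<Rightarrow> 'v::ab_group_add set" where
  "Vsp_r sm l b b' m r = {x. numop l b b' x = sm (of_nat m) x \<and> Omegaop sm l b b' x = sm (of_int r) x}"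

text \<open>Restriction of an operator f to a subspace V, as a map V \<rightarrow> V (extended by 0 off V).\<close>
definition restr_op :: "'v set \<Rightarrow> ('v \<Rightarrow> 'v) \<Rightarrow> 'v \<Rightarrow> 'v::zero" where
  "restr_op V f = (\<lambda>x. if x \<in> V then f x else 0)"

definition ker_pow :: "'v set \<Rightarrow> ('v \<Rightarrow> 'v) \<Rightarrow> nat \<Rightarrow> 'v::zero set" where
  "ker_pow V f d = {x \<in> V. (restr_op V f ^^ d) x = 0}"

end

theory Submission
  imports Defs
begin

context finite_dimensional_vector_space
begin

lemma span_inter_zero:
  assumes C: "independent C" and BC: "B \<subseteq> C"
    and x1: "x \<in> span B" and x2: "x \<in> span (C - B)"
  shows "x = 0"
proof -
  have fC: "finite C" using C finiteI_independent by blast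
  have fB: "finite B" using fC BC finite_subset by blast
  have fCB: "finite (C - B)" using fC by simp
  obtain u where u: "x = (\<Sum>v\<in>B. u v *s v)" using x1 span_finite[OF fB] by auto
  obtain w where w: "x = (\<Sum>v\<in>C - B. w v *s v)" using x2 span_finite[OF fCB] by auto
  define g where "g v = (if v \<in> B then u v else - w v)" for v
  have "(\<Sum>v\<in>C. g v *s v) = (\<Sum>v\<in>B. g v *s v) + (\<Sum>v\<in>C - B. g v *s v)"
    using sum.subset_diff[OF BC fC] by (simp add: add.commute)
  also have "(\<Sum>v\<in>B. g v *s v) = x" using u by (simp add: g_def)
  also have "(\<Sum>v\<in>C - B. g v *s v) = - x" using w
    by (simp add: g_def sum_negf[symmetric])
  finally have "(\<Sum>v\<in>C. g v *s v) = 0" by simp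
  then have "\<forall>v\<in>C. g v = 0" using C independent_explicit by blast
  then have "\<forall>v\<in>B. u v = 0" using BC unfolding g_def by (metis subsetD)
  then show ?thesis using u by simp
qed

lemma rank_nullity:
  assumes lf: "Vector_Spaces.linear scale scale f" and S: "subspace S"
  shows "dim {x\<in>S. f x = 0} + dim (f ` S) = dim S"
proof -
  interpret lin: Vector_Spaces.linear scale scale f by fact
  let ?K = "{x\<in>S. f x = 0}"
  obtain B where B: "B \<subseteq> ?K" "independent B" "?K \<subseteq> span B" "card B = dim ?K"
    using basis_exists by blast
  obtain C where C: "B \<subseteq> C" "C \<subseteq> S" "independent C" "S \<subseteq> span C"
    using maximal_independent_subset_extend[of B S] B(1,2) by blast
  have fC: "finite C" using C(3) finiteI_independent by blast
  have spanC: "span C = S" using C S span_subspace by blast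
  have fB0: "\<forall>x\<in>B. f x = 0" using B(1) by auto
  have img: "f ` S = f ` span (C - B)"
  proof
    show "f ` span (C - B) \<subseteq> f ` S" using spanC span_mono[of "C - B" C] by auto
    show "f ` S \<subseteq> f ` span (C - B)"
    proof
      fix y assume "y \<in> f ` S"
      then obtain x where x: "x \<in> S" "y = f x" by auto
      then obtain u where u: "x = (\<Sum>v\<in>C. u v *s v)" using spanC span_finite[OF fC] by auto
      have "x = (\<Sum>v\<in>B. u v *s v) + (\<Sum>v\<in>C - B. u v *s v)"
        using u sum.subset_diff[OF C(1) fC] by (simp add: add.commute)
      then have "f x = f (\<Sum>v\<in>B. u v *s v) + f (\<Sum>v\<in>C - B. u v *s v)"
        using lin.add by simp
      moreover have "f (\<Sum>v\<in>B. u v *s v) = 0"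
        using fB0 by (simp add: lin.sum lin.scale)
      ultimately have "y = f (\<Sum>v\<in>C - B. u v *s v)" using x by simp
      moreover have "(\<Sum>v\<in>C - B. u v *s v) \<in> span (C - B)"
        by (intro span_sum span_scale span_base) auto
      ultimately show "y \<in> f ` span (C - B)" by blast
    qed
  qed
  have inj: "inj_on f (span (C - B))"
  proof -
    have "\<forall>x\<in>span (C - B). f x = 0 \<longrightarrow> x = 0"
    proof (intro ballI impI)
      fix x assume x: "x \<in> span (C - B)" "f x = 0"
      have "x \<in> S" using x(1) spanC span_mono[of "C - B" C] by auto
      then have "x \<in> span B" using x(2) B(3) by auto
      then show "x = 0" using span_inter_zero[OF C(3) C(1)] x(1) by blast
    qed
    then show ?thesis using lin.inj_on_iff_eq_0[OF subspace_span] by blast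
  qed
  interpret p: finite_dimensional_vector_space_pair_1 scale Basis scale by unfold_locales
  have "dim (f ` S) = dim (span (C - B))"
    using img p.dim_image_eq[OF lf, of "span (C - B)"] inj by (simp add: span_span)
  also have "\<dots> = card (C - B)"
    using dim_span_eq_card_independent independent_mono[OF C(3)] by blast
  finally have 1: "dim (f ` S) = card (C - B)" .
  have 2: "dim S = card C" using basis_card_eq_dim[OF C(2) C(4) C(3)] by simp
  have "card C = card B + card (C - B)"
    using card_Diff_subset[OF finite_subset[OF C(1) fC] C(1)] card_mono[OF fC C(1)] by simp
  then show ?thesis using 1 2 B(4) by simp
qed

definition dsum :: "'i set \<Rightarrow> ('i \<Rightarrow> 'b set) \<Rightarrow> 'b set" where
  "dsum I U = {(\<Sum>i\<in>I. u i) | u. \<forall>i\<in>I. u i \<in> U i}"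

lemma subspace_dsum:
  assumes sub: "\<forall>i\<in>I. subspace (U i)"
  shows "subspace (dsum I U)"
  unfolding subspace_def dsum_def
proof (intro conjI allI impI ballI)
  show "0 \<in> {(\<Sum>i\<in>I. u i) | u. \<forall>i\<in>I. u i \<in> U i}"
    using sub by (intro CollectI exI[of _ "\<lambda>_. 0"]) (auto simp: subspace_0)
next
  fix x y assume "x \<in> {(\<Sum>i\<in>I. u i) | u. \<forall>i\<in>I. u i \<in> U i}" "y \<in> {(\<Sum>i\<in>I. u i) | u. \<forall>i\<in>I. u i \<in> U i}"
  then obtain u w where u: "x = (\<Sum>i\<in>I. u i)" "\<forall>i\<in>I. u i \<in> U i"
    and w: "y = (\<Sum>i\<in>I. w i)" "\<forall>i\<in>I. w i \<in> U i" by blast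
  show "x + y \<in> {(\<Sum>i\<in>I. u i) | u. \<forall>i\<in>I. u i \<in> U i}"
    using u w sub by (intro CollectI exI[of _ "\<lambda>i. u i + w i"]) (auto simp: sum.distrib subspace_add)
next
  fix c x assume "x \<in> {(\<Sum>i\<in>I. u i) | u. \<forall>i\<in>I. u i \<in> U i}"
  then obtain u where u: "x = (\<Sum>i\<in>I. u i)" "\<forall>i\<in>I. u i \<in> U i" by blast
  show "c *s x \<in> {(\<Sum>i\<in>I. u i) | u. \<forall>i\<in>I. u i \<in> U i}"
    using u sub by (intro CollectI exI[of _ "\<lambda>i. c *s u i"]) (auto simp: scale_sum_right subspace_scale)
qed

lemma dim_dsum:
  assumes fin: "finite I"
  and sub: "\<forall>i\<in>I. subspace (U i)"
  and indep: "\<And>u. (\<forall>i\<in>I. u i \<in> U i) \<Longrightarrow> (\<Sum>i\<in>I. u i) = 0 \<Longrightarrow> (\<forall>i\<in>I. u i = 0)"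
  shows "dim (dsum I U) = (\<Sum>i\<in>I. dim (U i))"
  using fin sub indep
proof (induction I rule: finite_induct)
  case empty
  have "dsum {} U = {0}" unfolding dsum_def by auto
  then show ?case by simp
next
  case (insert a I)
  have subI: "\<forall>i\<in>I. subspace (U i)" using insert.prems(1) by auto
  have indI: "(\<forall>i\<in>I. u i \<in> U i) \<Longrightarrow> (\<Sum>i\<in>I. u i) = 0 \<Longrightarrow> (\<forall>i\<in>I. u i = 0)" for u
  proof -
    assume u: "\<forall>i\<in>I. u i \<in> U i" "(\<Sum>i\<in>I. u i) = 0"
    define u' where "u' i = (if i = a then 0 else u i)" for i
    have "\<forall>i\<in>insert a I. u' i \<in> U i"
      using u insert.prems(1) insert.hyps(2) by (auto simp: u'_def subspace_0)
    moreover have "(\<Sum>i\<in>insert a I. u' i) = 0"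
      using u insert.hyps by (simp add: u'_def) (smt (verit) sum.cong)
    ultimately have "\<forall>i\<in>insert a I. u' i = 0" using insert.prems(2) by blast
    then show "\<forall>i\<in>I. u i = 0" using insert.hyps(2) by (auto simp: u'_def split: if_splits)
  qed
  have IH: "dim (dsum I U) = (\<Sum>i\<in>I. dim (U i))" using insert.IH[OF subI] indI by blast
  have eq: "dsum (insert a I) U = {x + y |x y. x \<in> U a \<and> y \<in> dsum I U}"
  proof (intro set_eqI iffI)
    fix z assume "z \<in> dsum (insert a I) U"
    then obtain u where u: "z = (\<Sum>i\<in>insert a I. u i)" "\<forall>i\<in>insert a I. u i \<in> U i"
      unfolding dsum_def by blast
    then have "z = u a + (\<Sum>i\<in>I. u i)" using insert.hyps by simp
    then show "z \<in> {x + y |x y. x \<in> U a \<and> y \<in> dsum I U}"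
      using u(2) unfolding dsum_def by blast
  next
    fix z assume "z \<in> {x + y |x y. x \<in> U a \<and> y \<in> dsum I U}"
    then obtain x u where xu: "z = x + (\<Sum>i\<in>I. u i)" "x \<in> U a" "\<forall>i\<in>I. u i \<in> U i"
      unfolding dsum_def by blast
    define u' where "u' i = (if i = a then x else u i)" for i
    have "z = (\<Sum>i\<in>insert a I. u' i)"
      using xu insert.hyps by (simp add: u'_def) (smt (verit) sum.cong)
    moreover have "\<forall>i\<in>insert a I. u' i \<in> U i" using xu by (auto simp: u'_def)
    ultimately show "z \<in> dsum (insert a I) U" unfolding dsum_def by blast
  qed
  have int: "U a \<inter> dsum I U = {0}"
  proof (intro set_eqI iffI)
    fix z assume "z \<in> U a \<inter> dsum I U"
    then obtain u where u: "z \<in> U a" "z = (\<Sum>i\<in>I. u i)" "\<forall>i\<in>I. u i \<in> U i"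
      unfolding dsum_def by blast
    define u' where "u' i = (if i = a then - z else u i)" for i
    have "\<forall>i\<in>insert a I. u' i \<in> U i"
      using u insert.prems(1) by (auto simp: u'_def subspace_neg)
    moreover have "(\<Sum>i\<in>insert a I. u' i) = 0"
      using u insert.hyps by (simp add: u'_def) (smt (verit) sum.cong)
    ultimately have "\<forall>i\<in>insert a I. u' i = 0" using insert.prems(2) by blast
    then show "z \<in> {0}" by (auto simp: u'_def)
  next
    fix z :: 'b assume "z \<in> {0}"
    then show "z \<in> U a \<inter> dsum I U"
      using insert.prems(1) subspace_dsum[OF subI] by (auto simp: subspace_0)
  qed
  have "dim (dsum (insert a I) U) + dim (U a \<inter> dsum I U) = dim (U a) + dim (dsum I U)"
    unfolding eq using dim_sums_Int insert.prems(1) subspace_dsum[OF subI] by blast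
  then show ?case using int IH insert.hyps by simp
qed

end


context vector_space
begin

lemma pow0: "Vector_Spaces.linear scale scale e \<Longrightarrow> (e^^j) 0 = 0"
proof (induction j)
  case (Suc j)
  interpret le: Vector_Spaces.linear scale scale e by fact
  show ?case using Suc by (simp add: le.zero)
qed simp

lemma sl2_formula:
  assumes le: "Vector_Spaces.linear scale scale e" and lf: "Vector_Spaces.linear scale scale f"
  and We: "\<And>r x. x \<in> W r \<Longrightarrow> e x \<in> W (r+1)"
  and comm: "\<And>r x. x \<in> W r \<Longrightarrow> e (f x) - f (e x) = of_int (2*r - N) *s x"
  and x: "x \<in> W r"
  shows "f ((e^^Suc j) x) = (e^^Suc j) (f x) - of_int ((int j+1)*(2*r - N + int j)) *s (e^^j) x"
proof (induction j)
  case 0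
  have "e (f x) - f (e x) = of_int (2*r - N) *s x" using comm[OF x] .
  then have "f (e x) = e (f x) - of_int (2*r - N) *s x" by (simp add: algebra_simps)
  then show ?case by simp
next
  case (Suc j)
  interpret le: Vector_Spaces.linear scale scale e by fact
  have Wj: "\<And>j. (e^^j) x \<in> W (r + int j)"
  proof -
    fix j show "(e^^j) x \<in> W (r + int j)"
    proof (induction j)
      case (Suc j)
      have "e ((e^^j) x) \<in> W (r + int j + 1)" using We[OF Suc] .
      moreover have "r + int j + 1 = r + int (Suc j)" by simp
      ultimately show ?case by (metis funpow.simps(2) o_apply)
    qed (use x in simp)
  qed
  define y where "y = (e^^Suc j) x"
  define z where "z = (e^^j) x"
  define c1 where "c1 = (of_int ((int j+1)*(2*r - N + int j)) :: 'a)"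
  define c2 where "c2 = (of_int (2*(r + int (Suc j)) - N) :: 'a)"
  have IH: "f y = (e^^Suc j) (f x) - c1 *s z" using Suc unfolding y_def z_def c1_def .
  have ez: "e z = y" unfolding y_def z_def by simp
  have "e (f y) = e ((e^^Suc j) (f x)) - c1 *s e z" unfolding IH by (simp add: le.diff le.scale)
  also have "e ((e^^Suc j) (f x)) = (e^^Suc (Suc j)) (f x)" by simp
  finally have efy: "e (f y) = (e^^Suc (Suc j)) (f x) - c1 *s y" unfolding ez .
  have cy: "e (f y) - f (e y) = c2 *s y" using comm[OF Wj[of "Suc j"]] unfolding y_def c2_def .
  have "f ((e^^Suc (Suc j)) x) = f (e y)" unfolding y_def by simp
  also have "\<dots> = e (f y) - c2 *s y" using cy by (simp add: algebra_simps)
  also have "\<dots> = (e^^Suc (Suc j)) (f x) - (c1 + c2) *s y" unfolding efy scale_left_distrib by (simp add: diff_diff_eq)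
  also have "c1 + c2 = of_int ((int (Suc j)+1)*(2*r - N + int (Suc j)))"
    unfolding c1_def c2_def by (simp add: algebra_simps)
  finally show ?case unfolding y_def .
qed

lemma sl2_step:
  assumes le: "Vector_Spaces.linear scale scale e" and lf: "Vector_Spaces.linear scale scale f"
  and We: "\<And>r x. x \<in> W r \<Longrightarrow> e x \<in> W (r+1)"
  and comm: "\<And>r x. x \<in> W r \<Longrightarrow> e (f x) - f (e x) = of_int (2*r - N) *s x"
  and ch: "\<And>n::int. n \<noteq> 0 \<Longrightarrow> (of_int n::'a) \<noteq> 0"
  and a: "2 * r + int (Suc k) \<le> N" "x \<in> W r" "(e^^Suc k) x = 0" "f x = 0"
  shows "(e^^k) x = 0"
proof -
  interpret lf: Vector_Spaces.linear scale scale f by fact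
  have "f ((e^^Suc k) x) = (e^^Suc k) (f x) - of_int ((int k+1)*(2*r - N + int k)) *s (e^^k) x"
    using sl2_formula[OF le lf We comm a(2)] by simp
  moreover have "f ((e^^Suc k) x) = 0" using a(3) lf.zero by simp
  moreover have "(e^^Suc k) (f x) = 0" using a(4) pow0[OF le, of "Suc k"] by simp
  ultimately have "of_int ((int k+1)*(2*r - N + int k)) *s (e^^k) x = 0"
    by simp
  moreover have "(of_int ((int k+1)*(2*r - N + int k))::'a) \<noteq> 0"
    by (intro ch) (use a(1) in simp)
  ultimately show "(e^^k) x = 0" using scale_eq_0_iff by blast
qed

lemma sl2_fx:
  assumes le: "Vector_Spaces.linear scale scale e" and lf: "Vector_Spaces.linear scale scale f"
  and We: "\<And>r x. x \<in> W r \<Longrightarrow> e x \<in> W (r+1)"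
  and comm: "\<And>r x. x \<in> W r \<Longrightarrow> e (f x) - f (e x) = of_int (2*r - N) *s x"
  and a: "x \<in> W r" "(e^^Suc k) x = 0"
  shows "(e^^Suc (Suc k)) (f x) = 0"
proof -
  interpret lf: Vector_Spaces.linear scale scale f by fact
  interpret le: Vector_Spaces.linear scale scale e by fact
  have z: "(e^^Suc (Suc k)) x = 0" using a(2) le.zero by simp
  have "f ((e^^Suc (Suc k)) x) = (e^^Suc (Suc k)) (f x) - of_int ((int (Suc k)+1)*(2*r - N + int (Suc k))) *s (e^^Suc k) x"
    using sl2_formula[OF le lf We comm a(1)] by blast
  then show ?thesis using z a(2) lf.zero by simp
qed

lemma sl2_inj_nat:
  assumes le: "Vector_Spaces.linear scale scale e" and lf: "Vector_Spaces.linear scale scale f"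
  and We: "\<And>r x. x \<in> W r \<Longrightarrow> e x \<in> W (r+1)"
  and Wf: "\<And>r x. x \<in> W r \<Longrightarrow> f x \<in> W (r-1)"
  and Wneg: "\<And>x. x \<in> W (-1) \<Longrightarrow> x = 0"
  and comm: "\<And>r x. x \<in> W r \<Longrightarrow> e (f x) - f (e x) = of_int (2*r - N) *s x"
  and ch: "\<And>n::int. n \<noteq> 0 \<Longrightarrow> (of_int n::'a) \<noteq> 0"
  shows "2 * int n + int k \<le> N \<Longrightarrow> x \<in> W (int n) \<Longrightarrow> (e^^k) x = 0 \<Longrightarrow> x = 0"
proof (induction n arbitrary: k x)
  case 0
  then show ?case
  proof (induction k arbitrary: x)
    case (Suc k)
    have "f x = 0" using Wf[OF Suc.prems(2)] Wneg by simp
    then have "(e^^k) x = 0" using sl2_step[where e=e and f=f and W=W and N=N and r="int 0" and k=k and x=x, OF le lf We comm ch] Suc.prems by simp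
    then show ?case using Suc.IH Suc.prems by simp
  qed simp
next
  case (Suc n)
  note IHn = Suc.IH
  from Suc.prems show ?case
  proof (induction k arbitrary: x)
    case (Suc k)
    have "(e^^Suc (Suc k)) (f x) = 0" using sl2_fx[OF le lf We comm Suc.prems(2,3)] .
    moreover have "f x \<in> W (int n)" using Wf[OF Suc.prems(2)] by simp
    moreover have "2 * int n + int (Suc (Suc k)) \<le> N" using Suc.prems(1) by simp
    ultimately have "f x = 0" using IHn by blast
    then have "(e^^k) x = 0" using sl2_step[where e=e and f=f and W=W and N=N and r="int (Suc n)" and k=k and x=x, OF le lf We comm ch] Suc.prems by simp
    then show ?case using Suc.IH Suc.prems by simp
  qed simp
qed

lemma sl2_inj:
  assumes le: "Vector_Spaces.linear scale scale e" and lf: "Vector_Spaces.linear scale scale f"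
  and We: "\<And>r x. x \<in> W r \<Longrightarrow> e x \<in> W (r+1)"
  and Wf: "\<And>r x. x \<in> W r \<Longrightarrow> f x \<in> W (r-1)"
  and Wneg: "\<And>r x. r < 0 \<Longrightarrow> x \<in> W r \<Longrightarrow> x = 0"
  and comm: "\<And>r x. x \<in> W r \<Longrightarrow> e (f x) - f (e x) = of_int (2*r - N) *s x"
  and ch: "\<And>n::int. n \<noteq> 0 \<Longrightarrow> (of_int n::'a) \<noteq> 0"
  and a: "2 * r + int k \<le> N" "x \<in> W r" "(e^^k) x = 0"
  shows "x = 0"
proof (cases "r < 0")
  case True then show ?thesis using Wneg a by blast
next
  case False
  then obtain n where n: "r = int n" by (metis nonneg_int_cases not_less)
  have W1: "\<And>x. x \<in> W (-1) \<Longrightarrow> x = 0" by (rule Wneg[of "-1"]) simp_all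
  show ?thesis using sl2_inj_nat[where e=e and f=f and W=W and N=N and n=n and k=k and x=x, OF le lf We Wf W1 comm ch] a n by simp
qed

end


locale ferm =
  fixes sm :: "complex \<Rightarrow> 'v::ab_group_add \<Rightarrow> 'v" and l :: nat
    and b b' :: "nat \<Rightarrow> 'v \<Rightarrow> 'v" and right :: 'v
  assumes fs: "fermion_system sm l b b' right"
begin

definition "P = occ_patterns l"
definition "vv nu = creation_word b' nu l right"
definition "Bs = vv ` P"

lemma vs: "vector_space sm" using fs unfolding fermion_system_def by blast

sublocale vector_space sm by (rule vs)

lemma finite_P: "finite P"
proof -
  have "P \<subseteq> (\<lambda>S k. k \<in> S) ` Pow {1..l}"
  proof
    fix nu assume "nu \<in> P"
    then have "{k. nu k} \<subseteq> {1..l}" "nu = (\<lambda>k. k \<in> {k. nu k})"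
      unfolding P_def occ_patterns_def by auto
    then show "nu \<in> (\<lambda>S k. k \<in> S) ` Pow {1..l}" by blast
  qed
  then show ?thesis using finite_subset by blast
qed

lemma inj_vv: "inj_on vv P"
  using fs unfolding fermion_system_def P_def vv_def[abs_def] by blast

lemma indep_Bs: "independent Bs"
  using fs unfolding fermion_system_def P_def vv_def[abs_def] Bs_def by blast

lemma span_Bs: "span Bs = UNIV"
  using fs unfolding fermion_system_def P_def vv_def[abs_def] Bs_def by blast

sublocale fdv: finite_dimensional_vector_space sm Bs
  by unfold_locales (use finite_P indep_Bs span_Bs in \<open>auto simp: Bs_def\<close>)

lemma lin_b: "k \<in> {1..l} \<Longrightarrow> Vector_Spaces.linear sm sm (b k)"
  using fs unfolding fermion_system_def by blast
lemma lin_b': "k \<in> {1..l} \<Longrightarrow> Vector_Spaces.linear sm sm (b' k)"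
  using fs unfolding fermion_system_def by blast

lemma b_add: "k \<in> {1..l} \<Longrightarrow> b k (x + y) = b k x + b k y"
  using lin_b[THEN Vector_Spaces.linear_iff[THEN iffD1]] by blast
lemma b_scale: "k \<in> {1..l} \<Longrightarrow> b k (sm c x) = sm c (b k x)"
  using lin_b[THEN Vector_Spaces.linear_iff[THEN iffD1]] by blast
lemma b'_add: "k \<in> {1..l} \<Longrightarrow> b' k (x + y) = b' k x + b' k y"
  using lin_b'[THEN Vector_Spaces.linear_iff[THEN iffD1]] by blast
lemma b'_scale: "k \<in> {1..l} \<Longrightarrow> b' k (sm c x) = sm c (b' k x)"
  using lin_b'[THEN Vector_Spaces.linear_iff[THEN iffD1]] by blast

lemma b_zero: "k \<in> {1..l} \<Longrightarrow> b k 0 = 0"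
  using b_add[of k 0 0] by simp
lemma b'_zero: "k \<in> {1..l} \<Longrightarrow> b' k 0 = 0"
  using b'_add[of k 0 0] by simp
lemma b_neg: "k \<in> {1..l} \<Longrightarrow> b k (- x) = - b k x"
  using b_add[of k x "-x"] b_zero[of k] by (simp add: eq_neg_iff_add_eq_0 add.commute)
lemma b'_neg: "k \<in> {1..l} \<Longrightarrow> b' k (- x) = - b' k x"
  using b'_add[of k x "-x"] b'_zero[of k] by (simp add: eq_neg_iff_add_eq_0 add.commute)
lemma b_diff: "k \<in> {1..l} \<Longrightarrow> b k (x - y) = b k x - b k y"
  using b_add[of k x "-y"] b_neg[of k y] by simp
lemma b'_diff: "k \<in> {1..l} \<Longrightarrow> b' k (x - y) = b' k x - b' k y"
  using b'_add[of k x "-y"] b'_neg[of k y] by simp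
lemma b_sum: "k \<in> {1..l} \<Longrightarrow> b k (\<Sum>i\<in>A. g i) = (\<Sum>i\<in>A. b k (g i))"
  by (induction A rule: infinite_finite_induct) (auto simp: b_zero b_add)
lemma b'_sum: "k \<in> {1..l} \<Longrightarrow> b' k (\<Sum>i\<in>A. g i) = (\<Sum>i\<in>A. b' k (g i))"
  by (induction A rule: infinite_finite_induct) (auto simp: b'_zero b'_add)

lemma ac_bb: "j \<in> {1..l} \<Longrightarrow> k \<in> {1..l} \<Longrightarrow> b j (b k x) = - b k (b j x)"
proof -
  assume "j \<in> {1..l}" "k \<in> {1..l}"
  then have "anticomm (b j) (b k) = (\<lambda>_. 0)" using fs unfolding fermion_system_def by blast
  then have "b j (b k x) + b k (b j x) = 0" unfolding anticomm_def by metis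
  then show ?thesis by (simp add: eq_neg_iff_add_eq_0 add.commute)
qed

lemma ac_b'b': "j \<in> {1..l} \<Longrightarrow> k \<in> {1..l} \<Longrightarrow> b' j (b' k x) = - b' k (b' j x)"
proof -
  assume "j \<in> {1..l}" "k \<in> {1..l}"
  then have "anticomm (b' j) (b' k) = (\<lambda>_. 0)" using fs unfolding fermion_system_def by blast
  then have "b' j (b' k x) + b' k (b' j x) = 0" unfolding anticomm_def by metis
  then show ?thesis by (simp add: eq_neg_iff_add_eq_0 add.commute)
qed

lemma ac_bb': "j \<in> {1..l} \<Longrightarrow> k \<in> {1..l} \<Longrightarrow> b j (b' k x) = (if j = k then x else 0) - b' k (b j x)"
proof -
  assume "j \<in> {1..l}" "k \<in> {1..l}"
  then have "anticomm (b j) (b' k) = (\<lambda>x. if j = k then x else 0)" using fs unfolding fermion_system_def by blast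
  then have "b j (b' k x) + b' k (b j x) = (if j = k then x else 0)" unfolding anticomm_def by metis
  then show ?thesis by (simp add: eq_diff_eq)
qed

lemma b_right: "k \<in> {1..l} \<Longrightarrow> b k right = 0"
  using fs unfolding fermion_system_def by blast

definition "nop k x = b' k (b k x)"

lemma nop_b': "j \<in> {1..l} \<Longrightarrow> k \<in> {1..l} \<Longrightarrow>
   nop k (b' j x) = b' j (nop k x) + (if j = k then b' j x else 0)"
proof -
  assume jk: "j \<in> {1..l}" "k \<in> {1..l}"
  have "nop k (b' j x) = b' k ((if k = j then x else 0) - b' j (b k x))"
    unfolding nop_def using ac_bb'[OF jk(2) jk(1)] by simp
  also have "\<dots> = (if k = j then b' k x else 0) - b' k (b' j (b k x))"
    using jk by (simp add: b'_diff b'_zero)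
  also have "b' k (b' j (b k x)) = - b' j (nop k x)"
    unfolding nop_def using ac_b'b'[OF jk(2) jk(1)] by simp
  finally show ?thesis by auto
qed

lemma nop_b: "j \<in> {1..l} \<Longrightarrow> k \<in> {1..l} \<Longrightarrow>
   nop k (b j x) = b j (nop k x) - (if j = k then b j x else 0)"
proof -
  assume jk: "j \<in> {1..l}" "k \<in> {1..l}"
  have "nop k (b j x) = b' k (- b j (b k x))"
    unfolding nop_def using ac_bb[OF jk(2) jk(1)] by simp
  also have "\<dots> = - b' k (b j (b k x))" using jk by (simp add: b'_neg)
  also have "b' k (b j (b k x)) = (if j = k then b k x else 0) - b j (nop k x)"
    unfolding nop_def using ac_bb'[OF jk(1) jk(2), of "b k x"] by (simp add: algebra_simps)
  finally show ?thesis by auto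
qed

end


context ferm
begin

interpretation vp: vector_space_pair sm sm by unfold_locales

lemma lin_nop: "k \<in> {1..l} \<Longrightarrow> Vector_Spaces.linear sm sm (nop k)"
proof -
  assume k: "k \<in> {1..l}"
  have "nop k = b' k \<circ> b k" unfolding nop_def by auto
  then show ?thesis using Vector_Spaces.linear_compose[OF lin_b[OF k] lin_b'[OF k]] by simp
qed

lemma nop_scale: "k \<in> {1..l} \<Longrightarrow> nop k (sm c x) = sm c (nop k x)"
  unfolding nop_def by (simp add: b_scale b'_scale)
lemma nop_add: "k \<in> {1..l} \<Longrightarrow> nop k (x + y) = nop k x + nop k y"
  unfolding nop_def by (simp add: b_add b'_add)

lemma nop_right: "k \<in> {1..l} \<Longrightarrow> nop k right = sm 0 right"
  unfolding nop_def by (simp add: b_right b'_zero)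

lemma cw_eig:
  assumes k: "k \<in> {1..l}"
  shows "n \<le> l \<Longrightarrow> nop k y = sm c y \<Longrightarrow>
     nop k (creation_word b' nu n y) = sm (c + (if nu k \<and> k \<le> n then 1 else 0)) (creation_word b' nu n y)"
proof (induction n arbitrary: y c)
  case 0
  then show ?case using k by simp
next
  case (Suc n)
  define y' where "y' = (if nu (Suc n) then b' (Suc n) y else y)"
  have sn: "Suc n \<in> {1..l}" using Suc.prems by simp
  have cw: "creation_word b' nu (Suc n) y = creation_word b' nu n y'" by (simp add: y'_def)
  have y': "nop k y' = sm (c + (if nu (Suc n) \<and> k = Suc n then 1 else 0)) y'"
  proof (cases "nu (Suc n)")
    case True
    have "nop k (b' (Suc n) y) = b' (Suc n) (sm c y) + (if Suc n = k then b' (Suc n) y else 0)"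
      using nop_b'[OF sn k] Suc.prems(2) by simp
    also have "\<dots> = sm (c + (if k = Suc n then 1 else 0)) (b' (Suc n) y)"
      using b'_scale[OF sn] by (auto simp: scale_left_distrib)
    finally show ?thesis using True by (simp add: y'_def)
  next
    case False
    then show ?thesis using Suc.prems(2) by (simp add: y'_def)
  qed
  have "nop k (creation_word b' nu n y') = sm ((c + (if nu (Suc n) \<and> k = Suc n then 1 else 0)) + (if nu k \<and> k \<le> n then 1 else 0)) (creation_word b' nu n y')"
    using Suc.IH[OF _ y'] Suc.prems(1) by simp
  moreover have "(c + (if nu (Suc n) \<and> k = Suc n then 1 else 0)) + (if nu k \<and> k \<le> n then 1 else 0)
     = c + (if nu k \<and> k \<le> Suc n then 1 else 0)"
    by (cases "k = Suc n") auto
  ultimately show ?case using cw by simp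
qed

lemma vv_nop: "nu \<in> P \<Longrightarrow> k \<in> {1..l} \<Longrightarrow> nop k (vv nu) = sm (if nu k then 1 else 0) (vv nu)"
  using cw_eig[of k l right 0 nu] nop_right[of k] unfolding vv_def by auto

definition "cnt nu = card {k\<in>{1..l}. nu k}"
definition "wt nu = (\<Sum>k\<in>{k\<in>{1..l}. nu k}. k)"

definition "Kop x = (\<Sum>k=1..l. sm (of_nat k) (nop k x))"
abbreviation "Nop \<equiv> numop l b b'"
abbreviation "Om \<equiv> Omegaop sm l b b'"

lemma Nop_eq: "Nop x = (\<Sum>k=1..l. nop k x)"
  unfolding numop_def nop_def by simp

lemma Om_eq: "Om x = Kop x - sm (1/2) (Nop (Nop x) + Nop x)"
  unfolding Omegaop_def Kop_def nop_def by simp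

lemma lin_Nop: "Vector_Spaces.linear sm sm Nop"
  unfolding Nop_eq[abs_def] by (rule vp.linear_compose_sum) (use lin_nop in blast)

lemma lin_Kop: "Vector_Spaces.linear sm sm Kop"
  unfolding Kop_def[abs_def]
  by (rule vp.linear_compose_sum) (auto intro!: vp.linear_compose_scale_right lin_nop)

lemma lin_Om: "Vector_Spaces.linear sm sm Om"
proof -
  have eq: "Om = (\<lambda>x. Kop x - sm (1/2) ((Nop \<circ> Nop) x + Nop x))" by (rule ext) (simp only: Om_eq o_apply)
  have l1: "Vector_Spaces.linear sm sm (Nop \<circ> Nop)" by (rule Vector_Spaces.linear_compose[OF lin_Nop lin_Nop])
  have l2: "Vector_Spaces.linear sm sm (\<lambda>x. (Nop \<circ> Nop) x + Nop x)" by (rule vp.linear_compose_add[OF l1 lin_Nop])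
  have l3: "Vector_Spaces.linear sm sm (\<lambda>x. sm (1/2) ((Nop \<circ> Nop) x + Nop x))" by (rule vp.linear_compose_scale_right[OF l2])
  have l4: "Vector_Spaces.linear sm sm (\<lambda>x. Kop x - sm (1/2) ((Nop \<circ> Nop) x + Nop x))" by (rule vp.linear_compose_sub[OF lin_Kop l3])
  show ?thesis unfolding eq by (rule l4)
qed

lemma vv_Nop: "nu \<in> P \<Longrightarrow> Nop (vv nu) = sm (of_nat (cnt nu)) (vv nu)"
proof -
  assume nu: "nu \<in> P"
  have "Nop (vv nu) = (\<Sum>k=1..l. sm (if nu k then 1 else 0) (vv nu))"
    unfolding Nop_eq using vv_nop[OF nu] by simp
  also have "\<dots> = sm (\<Sum>k=1..l. if nu k then 1 else 0) (vv nu)" by (simp add: scale_sum_left)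
  also have "(\<Sum>k=1..l. if nu k then 1 else 0) = (of_nat (cnt nu) :: complex)"
    unfolding cnt_def by (simp add: sum.inter_filter[symmetric])
  finally show ?thesis .
qed

lemma vv_Kop: "nu \<in> P \<Longrightarrow> Kop (vv nu) = sm (of_nat (wt nu)) (vv nu)"
proof -
  assume nu: "nu \<in> P"
  have "Kop (vv nu) = (\<Sum>k=1..l. sm (if nu k then of_nat k else 0) (vv nu))"
    unfolding Kop_def using vv_nop[OF nu] by (auto intro!: sum.cong)
  also have "\<dots> = sm (\<Sum>k=1..l. if nu k then of_nat k else 0) (vv nu)" by (simp add: scale_sum_left)
  also have "(\<Sum>k=1..l. if nu k then of_nat k else 0) = (of_nat (wt nu) :: complex)"
    unfolding wt_def by (simp add: sum.inter_filter[symmetric])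
  finally show ?thesis .
qed

definition "om nu = (of_nat (wt nu) - (of_nat (cnt nu)^2 + of_nat (cnt nu)) / 2 :: complex)"

lemma vv_Om: "nu \<in> P \<Longrightarrow> Om (vv nu) = sm (om nu) (vv nu)"
proof -
  assume nu: "nu \<in> P"
  interpret N: Vector_Spaces.linear sm sm Nop by (rule lin_Nop)
  define c where "c = (of_nat (cnt nu) :: complex)"
  define w where "w = (of_nat (wt nu) :: complex)"
  have NN: "Nop (Nop (vv nu)) = sm (c * c) (vv nu)"
    using vv_Nop[OF nu] N.scale unfolding c_def by simp
  have "Om (vv nu) = sm w (vv nu) - sm (1/2) (sm (c * c) (vv nu) + sm c (vv nu))"
    unfolding Om_eq NN using vv_Kop[OF nu] vv_Nop[OF nu] unfolding c_def w_def by simp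
  also have "\<dots> = sm w (vv nu) - sm ((c * c + c) / 2) (vv nu)"
    by (simp add: scale_right_distrib scale_left_distrib[symmetric])
  also have "\<dots> = sm (w - (c * c + c) / 2) (vv nu)"
    by (simp add: scale_left_diff_distrib)
  also have "w - (c * c + c) / 2 = om nu" unfolding om_def c_def w_def by (simp add: power2_eq_square)
  finally show ?thesis .
qed

end


lemma sum_bounds:
  "finite S \<Longrightarrow> S \<subseteq> {1..n} \<Longrightarrow> card S = m \<Longrightarrow>
    m * (m + 1) \<le> 2 * (\<Sum>S) \<and> 2 * (\<Sum>S) + m * m \<le> m * (2 * n + 1)"
proof (induction n arbitrary: S m)
  case 0
  then show ?case by auto
next
  case (Suc n)
  show ?case
  proof (cases "Suc n \<in> S")
    case True
    define S' where "S' = S - {Suc n}"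
    have S'sub: "S' \<subseteq> {1..n}" using Suc.prems(2) unfolding S'_def by auto
    have fS': "finite S'" using Suc.prems(1) unfolding S'_def by simp
    have cS: "card S' + 1 = m" using Suc.prems(1,3) True unfolding S'_def
      by (simp add: card_Diff_singleton) (metis One_nat_def Suc_pred card_gt_0_iff empty_iff)
    have sS: "\<Sum>S = \<Sum>S' + Suc n" using Suc.prems(1) True unfolding S'_def
      by (simp add: sum.remove)
    have cle: "card S' \<le> n" using card_mono[OF _ S'sub] by simp
    obtain m' where m': "m' = card S'" by simp
    have IH: "m' * (m' + 1) \<le> 2 * (\<Sum>S') \<and> 2 * (\<Sum>S') + m' * m' \<le> m' * (2 * n + 1)"
      using Suc.IH[OF fS' S'sub m'[symmetric]] .
    have mm: "m = m' + 1" using cS m' by simp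
    show ?thesis using IH cle unfolding sS mm m'[symmetric] by (simp add: algebra_simps)
  next
    case False
    then have "S \<subseteq> {1..n}" using Suc.prems(2) by (auto simp: le_Suc_eq)
    then have "m * (m + 1) \<le> 2 * (\<Sum>S) \<and> 2 * (\<Sum>S) + m * m \<le> m * (2 * n + 1)"
      using Suc.IH Suc.prems by blast
    moreover have "m * (2 * n + 1) \<le> m * (2 * Suc n + 1)" by simp
    ultimately show ?thesis by linarith
  qed
qed

context ferm
begin

definition "co x nu = representation Bs x (vv nu)"

lemma expand: "x = (\<Sum>nu\<in>P. sm (co x nu) (vv nu))"
proof -
  have "(\<Sum>v\<in>Bs. sm (representation Bs x v) v) = x"
    using sum_representation_eq[OF indep_Bs _ fdv.finite_Basis order_refl] span_Bs by simp
  moreover have "(\<Sum>v\<in>Bs. sm (representation Bs x v) v) = (\<Sum>nu\<in>P. sm (co x nu) (vv nu))"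
    unfolding Bs_def co_def using sum.reindex[OF inj_vv] by simp
  ultimately show ?thesis by simp
qed

lemma uniq: "(\<Sum>nu\<in>P. sm (a nu) (vv nu)) = 0 \<Longrightarrow> mu \<in> P \<Longrightarrow> a mu = 0"
proof -
  assume s: "(\<Sum>nu\<in>P. sm (a nu) (vv nu)) = 0" and mu: "mu \<in> P"
  define c where "c v = a (the_inv_into P vv v)" for v
  have "(\<Sum>v\<in>Bs. sm (c v) v) = (\<Sum>nu\<in>P. sm (c (vv nu)) (vv nu))"
    unfolding Bs_def using sum.reindex[OF inj_vv] by simp
  also have "\<dots> = (\<Sum>nu\<in>P. sm (a nu) (vv nu))"
    unfolding c_def using the_inv_into_f_f[OF inj_vv] by simp
  finally have "(\<Sum>v\<in>Bs. sm (c v) v) = 0" using s by simp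
  then have "\<forall>v\<in>Bs. c v = 0" using fdv.independent_explicit indep_Bs by blast
  then have "c (vv mu) = 0" using mu unfolding Bs_def by blast
  then show ?thesis unfolding c_def using the_inv_into_f_f[OF inj_vv mu] by simp
qed

lemma co_comb: "mu \<in> P \<Longrightarrow> co (\<Sum>nu\<in>P. sm (a nu) (vv nu)) mu = a mu"
proof -
  assume mu: "mu \<in> P"
  define x where "x = (\<Sum>nu\<in>P. sm (a nu) (vv nu))"
  have "x = (\<Sum>nu\<in>P. sm (co x nu) (vv nu))" by (rule expand)
  then have "(\<Sum>nu\<in>P. sm (co x nu) (vv nu)) - (\<Sum>nu\<in>P. sm (a nu) (vv nu)) = 0"
    unfolding x_def by simp
  then have "(\<Sum>nu\<in>P. sm (co x nu - a nu) (vv nu)) = 0"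
    by (simp add: sum_subtractf scale_left_diff_distrib)
  then have "co x mu - a mu = 0" using uniq[of "\<lambda>nu. co x nu - a nu" mu] mu by blast
  then show ?thesis unfolding x_def by simp
qed

lemma co_add: "co (x + y) nu = co x nu + co y nu"
  unfolding co_def using representation_add[OF indep_Bs] span_Bs by simp

lemma co_scale: "co (sm c x) nu = c * co x nu"
  unfolding co_def using representation_scale[OF indep_Bs] span_Bs by simp

lemma co_zero: "co 0 nu = 0"
  unfolding co_def by (simp add: representation_zero)

lemma co_sum: "co (\<Sum>i\<in>A. g i) nu = (\<Sum>i\<in>A. co (g i) nu)"
  by (induction A rule: infinite_finite_induct) (auto simp: co_zero co_add)

lemma eq_by_co: "(\<And>nu. nu \<in> P \<Longrightarrow> co x nu = co y nu) \<Longrightarrow> x = y"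
  using expand[of x] expand[of y] by (metis (no_types, lifting) sum.cong)

lemma diag:
  assumes lT: "Vector_Spaces.linear sm sm T"
    and ev: "\<And>nu. nu \<in> P \<Longrightarrow> T (vv nu) = sm (lam nu) (vv nu)"
  shows "T x = (\<Sum>nu\<in>P. sm (lam nu * co x nu) (vv nu))"
proof -
  interpret T: Vector_Spaces.linear sm sm T by fact
  have "T x = T (\<Sum>nu\<in>P. sm (co x nu) (vv nu))" using expand[of x] by simp
  also have "\<dots> = (\<Sum>nu\<in>P. sm (co x nu) (T (vv nu)))" by (simp add: T.sum T.scale)
  also have "\<dots> = (\<Sum>nu\<in>P. sm (lam nu * co x nu) (vv nu))"
    using ev by (auto intro!: sum.cong simp: mult.commute)
  finally show ?thesis .
qed

lemma eig_iff:
  assumes lT: "Vector_Spaces.linear sm sm T"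
    and ev: "\<And>nu. nu \<in> P \<Longrightarrow> T (vv nu) = sm (lam nu) (vv nu)"
  shows "T x = sm mu x \<longleftrightarrow> (\<forall>nu\<in>P. co x nu \<noteq> 0 \<longrightarrow> lam nu = mu)"
proof
  assume a: "T x = sm mu x"
  show "\<forall>nu\<in>P. co x nu \<noteq> 0 \<longrightarrow> lam nu = mu"
  proof (intro ballI impI)
    fix nu assume nu: "nu \<in> P" "co x nu \<noteq> 0"
    have "co (T x) nu = lam nu * co x nu" using diag[OF lT ev] co_comb[OF nu(1)] by simp
    moreover have "co (T x) nu = mu * co x nu" using a co_scale by simp
    ultimately show "lam nu = mu" using nu(2) by simp
  qed
next
  assume a: "\<forall>nu\<in>P. co x nu \<noteq> 0 \<longrightarrow> lam nu = mu"
  show "T x = sm mu x"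
  proof (rule eq_by_co)
    fix nu assume nu: "nu \<in> P"
    have "co (T x) nu = lam nu * co x nu" using diag[OF lT ev] co_comb[OF nu] by simp
    also have "\<dots> = mu * co x nu" using a nu by (cases "co x nu = 0") auto
    also have "\<dots> = co (sm mu x) nu" using co_scale by simp
    finally show "co (T x) nu = co (sm mu x) nu" .
  qed
qed

lemma inV: "x \<in> Vsp sm l b b' m \<longleftrightarrow> (\<forall>nu\<in>P. co x nu \<noteq> 0 \<longrightarrow> cnt nu = m)"
  unfolding Vsp_def using eig_iff[OF lin_Nop vv_Nop, of x "of_nat m"] by simp

lemma inW: "x \<in> Vsp_r sm l b b' m r \<longleftrightarrow> (\<forall>nu\<in>P. co x nu \<noteq> 0 \<longrightarrow> cnt nu = m \<and> om nu = of_int r)"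
  unfolding Vsp_r_def using eig_iff[OF lin_Nop vv_Nop, of x "of_nat m"] eig_iff[OF lin_Om vv_Om, of x "of_int r"]
  by auto

lemma om_range:
  assumes nu: "nu \<in> P" and c: "cnt nu = m"
  shows "\<exists>r::int. 0 \<le> r \<and> r \<le> int m * (int l - int m) \<and> om nu = of_int r"
proof -
  let ?S = "{k\<in>{1..l}. nu k}"
  have f: "finite ?S" by simp
  have s: "?S \<subseteq> {1..l}" by auto
  have cS: "card ?S = m" using c unfolding cnt_def .
  have bnd: "m * (m + 1) \<le> 2 * wt nu \<and> 2 * wt nu + m * m \<le> m * (2 * l + 1)"
    using sum_bounds[OF f s cS] unfolding wt_def by simp
  have ev: "even (m * (m + 1))" by simp
  then obtain q where q: "m * (m + 1) = 2 * q" by blast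
  define r where "r = int (wt nu) - int q"
  have h1: "int (m * (m + 1)) \<le> int (2 * wt nu)" by (rule of_nat_mono) (use bnd in blast)
  have h2: "int (2 * wt nu + m * m) \<le> int (m * (2 * l + 1))" by (rule of_nat_mono) (use bnd in blast)
  have hq: "int (m * (m + 1)) = 2 * int q" using q by simp
  have h1': "int m * int m + int m \<le> 2 * int (wt nu)" using h1 by (simp add: algebra_simps)
  have h2': "2 * int (wt nu) + int m * int m \<le> 2 * (int m * int l) + int m" using h2 by (simp add: algebra_simps)
  have hq': "int m * int m + int m = 2 * int q" using hq by (simp add: algebra_simps)
  have r2: "2 * r = 2 * int (wt nu) - (int m * int m + int m)" unfolding r_def using hq' by simp
  have "0 \<le> r" using h1' r2 by linarith
  moreover have "r \<le> int m * (int l - int m)"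
  proof -
    have "2 * r \<le> 2 * (int m * int l) - 2 * (int m * int m)" using h2' r2 by linarith
    then show ?thesis by (simp add: algebra_simps)
  qed
  moreover have "om nu = of_int r"
  proof -
    have "(of_int (2 * r) :: complex) = of_int (2 * int (wt nu) - (int m * int m + int m))"
      using r2 by simp
    then have "(2::complex) * of_int r = 2 * of_nat (wt nu) - (of_nat m * of_nat m + of_nat m)"
      by simp
    then show ?thesis unfolding om_def c by (simp add: field_simps power2_eq_square)
  qed
  ultimately show ?thesis by blast
qed

end


context ferm
begin

definition "Gop g x = (\<Sum>k=1..l. sm (g k) (nop k x))"

lemma Nop_G: "Nop x = Gop (\<lambda>_. 1) x"
  unfolding Nop_eq Gop_def by simp

lemma Kop_G: "Kop x = Gop of_nat x"
  unfolding Kop_def Gop_def by simp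

lemma bb_sum: "i \<in> {1..l} \<Longrightarrow> q \<in> {1..l} \<Longrightarrow>
   b' i (b q (\<Sum>k\<in>A. sm (g k) (y k))) = (\<Sum>k\<in>A. sm (g k) (b' i (b q (y k))))"
  by (simp add: b_sum b'_sum b_scale b'_scale)

lemma nop_bb: "i \<in> {1..l} \<Longrightarrow> q \<in> {1..l} \<Longrightarrow> k \<in> {1..l} \<Longrightarrow>
  nop k (b' i (b q y)) = b' i (b q (nop k y)) + ((if i = k then b' i (b q y) else 0) - (if q = k then b' i (b q y) else 0))"
proof -
  assume iqk: "i \<in> {1..l}" "q \<in> {1..l}" "k \<in> {1..l}"
  have "nop k (b' i (b q y)) = b' i (nop k (b q y)) + (if i = k then b' i (b q y) else 0)"
    using nop_b'[OF iqk(1) iqk(3)] .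
  also have "nop k (b q y) = b q (nop k y) - (if q = k then b q y else 0)"
    using nop_b[OF iqk(2) iqk(3)] .
  finally show ?thesis using iqk by (simp add: b'_diff b'_zero)
qed

lemma Gop_bb: "i \<in> {1..l} \<Longrightarrow> q \<in> {1..l} \<Longrightarrow>
  Gop g (b' i (b q y)) = b' i (b q (Gop g y)) + sm (g i - g q) (b' i (b q y))"
proof -
  assume iq: "i \<in> {1..l}" "q \<in> {1..l}"
  define X where "X = b' i (b q y)"
  have "Gop g X = (\<Sum>k=1..l. sm (g k) (b' i (b q (nop k y)))
        + (sm (g k) (if i = k then X else 0) - sm (g k) (if q = k then X else 0)))"
    unfolding Gop_def X_def using nop_bb[OF iq] by (auto intro!: sum.cong simp: scale_right_distrib scale_right_diff_distrib)
  also have "\<dots> = (\<Sum>k=1..l. sm (g k) (b' i (b q (nop k y))))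
        + ((\<Sum>k=1..l. sm (g k) (if i = k then X else 0)) - (\<Sum>k=1..l. sm (g k) (if q = k then X else 0)))"
    by (simp add: sum.distrib sum_subtractf)
  also have "(\<Sum>k=1..l. sm (g k) (if i = k then X else 0)) = sm (g i) X"
  proof -
    have "(\<Sum>k=1..l. sm (g k) (if i = k then X else 0)) = (\<Sum>k=1..l. if i = k then sm (g k) X else 0)"
      by (rule sum.cong) auto
    then show ?thesis using iq by (simp add: sum.delta)
  qed
  also have "(\<Sum>k=1..l. sm (g k) (if q = k then X else 0)) = sm (g q) X"
  proof -
    have "(\<Sum>k=1..l. sm (g k) (if q = k then X else 0)) = (\<Sum>k=1..l. if q = k then sm (g k) X else 0)"
      by (rule sum.cong) auto
    then show ?thesis using iq by (simp add: sum.delta)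
  qed
  also have "(\<Sum>k=1..l. sm (g k) (b' i (b q (nop k y)))) = b' i (b q (Gop g y))"
    unfolding Gop_def using bb_sum[OF iq, of g "\<lambda>k. nop k y" "{1..l}"] by simp
  finally show ?thesis unfolding X_def by (simp add: scale_left_diff_distrib)
qed

abbreviation "Eop \<equiv> Mop l b b'"
definition "cc k = (of_nat (k * (l - k)) :: complex)"
definition "Fop x = (\<Sum>k=1..l-1. sm (cc k) (b' k (b (k+1) x)))"

lemma Eop_eq: "Eop x = (\<Sum>k=1..l-1. b' (k+1) (b k x))"
  unfolding Mop_def by simp

lemma idx: "k \<in> {1..l-1} \<Longrightarrow> k \<in> {1..l} \<and> k + 1 \<in> {1..l}" by auto

lemma Gop_add: "Gop g (x + y) = Gop g x + Gop g y"
  unfolding Gop_def by (simp add: nop_add sum.distrib scale_right_distrib)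
lemma Gop_zero: "Gop g 0 = 0"
  using Gop_add[of g 0 0] by simp
lemma Gop_sum: "Gop g (\<Sum>i\<in>A. h i) = (\<Sum>i\<in>A. Gop g (h i))"
  by (induction A rule: infinite_finite_induct) (auto simp: Gop_zero Gop_add)
lemma Gop_scale: "Gop g (sm c x) = sm c (Gop g x)"
  unfolding Gop_def by (simp add: nop_scale scale_sum_right mult.commute)

lemma Gop_E: "Gop g (Eop x) = Eop (Gop g x) + (\<Sum>j=1..l-1. sm (g (j+1) - g j) (b' (j+1) (b j x)))"
proof -
  have "Gop g (Eop x) = (\<Sum>j=1..l-1. Gop g (b' (j+1) (b j x)))"
    unfolding Eop_eq by (simp add: Gop_sum)
  also have "\<dots> = (\<Sum>j=1..l-1. b' (j+1) (b j (Gop g x)) + sm (g (j+1) - g j) (b' (j+1) (b j x)))"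
    by (rule sum.cong) (use Gop_bb idx in auto)
  finally show ?thesis unfolding Eop_eq by (simp add: sum.distrib)
qed

lemma Gop_F: "Gop g (Fop x) = Fop (Gop g x) + (\<Sum>j=1..l-1. sm (cc j) (sm (g j - g (j+1)) (b' j (b (j+1) x))))"
proof -
  have "Gop g (Fop x) = (\<Sum>j=1..l-1. sm (cc j) (Gop g (b' j (b (j+1) x))))"
    unfolding Fop_def by (simp add: Gop_sum Gop_scale)
  also have "\<dots> = (\<Sum>j=1..l-1. sm (cc j) (b' j (b (j+1) (Gop g x))) + sm (cc j) (sm (g j - g (j+1)) (b' j (b (j+1) x))))"
    by (rule sum.cong) (use Gop_bb idx in \<open>auto simp: scale_right_distrib\<close>)
  finally show ?thesis unfolding Fop_def by (simp add: sum.distrib)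
qed

lemma Nop_E: "Nop (Eop x) = Eop (Nop x)"
  unfolding Nop_G using Gop_E[of "\<lambda>_. 1" x] by simp

lemma Kop_E: "Kop (Eop x) = Eop (Kop x) + Eop x"
  unfolding Kop_G using Gop_E[of of_nat x] by (simp add: Eop_eq)

lemma Nop_F: "Nop (Fop x) = Fop (Nop x)"
  unfolding Nop_G using Gop_F[of "\<lambda>_. 1" x] by simp

lemma Kop_F: "Kop (Fop x) = Fop (Kop x) - Fop x"
proof -
  have "Kop (Fop x) = Fop (Kop x) + (\<Sum>j=1..l-1. sm (cc j) (sm (-1) (b' j (b (j+1) x))))"
    unfolding Kop_G using Gop_F[of of_nat x] by simp
  also have "(\<Sum>j=1..l-1. sm (cc j) (sm (-1) (b' j (b (j+1) x)))) = - Fop x"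
    unfolding Fop_def by (simp add: sum_negf[symmetric])
  finally show ?thesis by simp
qed

end


context ferm
begin

lemma comm4:
  assumes ijpq: "i \<in> {1..l}" "j \<in> {1..l}" "p \<in> {1..l}" "q \<in> {1..l}"
  shows "b' i (b j (b' p (b q x))) - b' p (b q (b' i (b j x)))
     = (if j = p then b' i (b q x) else 0) - (if i = q then b' p (b j x) else 0)"
proof -
  define y where "y = b q x"
  define z where "z = b j x"
  have 1: "b' i (b j (b' p y)) = (if j = p then b' i y else 0) + b' p (b' i (b j y))"
  proof -
    have "b' i (b j (b' p y)) = b' i ((if j = p then y else 0) - b' p (b j y))"
      using ac_bb'[OF ijpq(2) ijpq(3)] by simp
    also have "\<dots> = (if j = p then b' i y else 0) - b' i (b' p (b j y))"
      using ijpq by (simp add: b'_diff b'_zero)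
    also have "b' i (b' p (b j y)) = - b' p (b' i (b j y))"
      using ac_b'b'[OF ijpq(1) ijpq(3)] by simp
    finally show ?thesis by simp
  qed
  have 2: "b' p (b' i (b j y)) = - (if i = q then b' p z else 0) + b' p (b q (b' i z))"
  proof -
    have "b j y = - b q z" unfolding y_def z_def using ac_bb[OF ijpq(2) ijpq(4)] by simp
    then have "b' p (b' i (b j y)) = - b' p (b' i (b q z))" using ijpq by (simp add: b'_neg)
    also have "b' i (b q z) = (if q = i then z else 0) - b q (b' i z)"
      using ac_bb'[OF ijpq(4) ijpq(1)] by simp
    finally show ?thesis using ijpq by (auto simp: b'_diff b'_zero)
  qed
  show ?thesis unfolding y_def[symmetric] using 1 2 unfolding z_def by simp
qed

lemma EF_comm: "Eop (Fop x) - Fop (Eop x) = (\<Sum>j=1..l-1. sm (cc j) (nop (j+1) x - nop j x))"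
proof -
  let ?J = "{1..l-1}"
  have A: "Eop (Fop x) = (\<Sum>j\<in>?J. \<Sum>k\<in>?J. sm (cc k) (b' (j+1) (b j (b' k (b (k+1) x)))))"
    unfolding Eop_eq Fop_def
  proof (rule sum.cong[OF refl])
    fix j assume j: "j \<in> ?J"
    show "b' (j+1) (b j (\<Sum>k\<in>?J. sm (cc k) (b' k (b (k+1) x)))) = (\<Sum>k\<in>?J. sm (cc k) (b' (j+1) (b j (b' k (b (k+1) x)))))"
      using bb_sum[of "j+1" j cc "\<lambda>k. b' k (b (k+1) x)" ?J] idx[OF j] by simp
  qed
  have B: "Fop (Eop x) = (\<Sum>j\<in>?J. \<Sum>k\<in>?J. sm (cc k) (b' k (b (k+1) (b' (j+1) (b j x)))))"
  proof -
    have "Fop (Eop x) = (\<Sum>k\<in>?J. \<Sum>j\<in>?J. sm (cc k) (b' k (b (k+1) (b' (j+1) (b j x)))))"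
      unfolding Eop_eq Fop_def by (rule sum.cong) (use idx in \<open>auto simp: b_sum b'_sum scale_sum_right\<close>)
    then show ?thesis using sum.swap[of "\<lambda>k j. sm (cc k) (b' k (b (k+1) (b' (j+1) (b j x))))" ?J ?J] by simp
  qed
  have "Eop (Fop x) - Fop (Eop x) = (\<Sum>j\<in>?J. \<Sum>k\<in>?J. sm (cc k) (b' (j+1) (b j (b' k (b (k+1) x))) - b' k (b (k+1) (b' (j+1) (b j x)))))"
    unfolding A B by (simp add: sum_subtractf scale_right_diff_distrib)
  also have "\<dots> = (\<Sum>j\<in>?J. \<Sum>k\<in>?J. if j = k then sm (cc j) (nop (j+1) x - nop j x) else 0)"
  proof (rule sum.cong[OF refl], rule sum.cong[OF refl])
    fix j k assume j: "j \<in> ?J" and k: "k \<in> ?J"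
    have "b' (j+1) (b j (b' k (b (k+1) x))) - b' k (b (k+1) (b' (j+1) (b j x)))
      = (if j = k then b' (j+1) (b (k+1) x) else 0) - (if j + 1 = k + 1 then b' k (b j x) else 0)"
      using comm4[of "j+1" j k "k+1" x] idx[OF j] idx[OF k] by simp
    then show "sm (cc k) (b' (j+1) (b j (b' k (b (k+1) x))) - b' k (b (k+1) (b' (j+1) (b j x))))
      = (if j = k then sm (cc j) (nop (j+1) x - nop j x) else 0)"
      unfolding nop_def by auto
  qed
  also have "\<dots> = (\<Sum>j\<in>?J. sm (cc j) (nop (j+1) x - nop j x))"
    by (simp add: sum.delta)
  finally show ?thesis .
qed

lemma cc_diff: "1 \<le> k \<Longrightarrow> k \<le> l \<Longrightarrow> cc (k - 1) - cc k = 2 * of_nat k - of_nat l - 1"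
proof -
  assume k: "1 \<le> k" "k \<le> l"
  obtain k' where k': "k = Suc k'" using k by (cases k) auto
  obtain t where t: "l = k + t" using k by (metis le_add_diff_inverse)
  have e1: "(k-1)*(l-(k-1)) = k'*(t+1)" using k' t by simp
  have e2: "k*(l-k) = (k'+1)*t" using k' t by simp
  have "cc (k - 1) - cc k = of_nat (k'*(t+1)) - of_nat ((k'+1)*t)" unfolding cc_def e1 e2 by simp
  also have "\<dots> = (of_nat k' - of_nat t :: complex)" by (simp add: algebra_simps)
  also have "\<dots> = 2 * of_nat k - of_nat l - 1" using k' t by (simp add: algebra_simps)
  finally show ?thesis .
qed

lemma tele:
  assumes l1: "1 \<le> l"
  shows "(\<Sum>j=1..l-1. sm (cc j) (h (j+1) - h j)) = (\<Sum>k=1..l. sm (2 * of_nat k - of_nat l - 1) (h k))"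
proof -
  obtain l' where l': "l = Suc l'" using l1 by (cases l) auto
  have c0: "cc 0 = 0" unfolding cc_def by simp
  have cl: "cc l = 0" unfolding cc_def by simp
  have A: "(\<Sum>j=1..l-1. sm (cc j) (h (j+1))) = (\<Sum>k=1..l. sm (cc (k - 1)) (h k))"
  proof -
    have "(\<Sum>k=1..l. sm (cc (k - 1)) (h k)) = sm (cc 0) (h 1) + (\<Sum>k=Suc 1..Suc l'. sm (cc (k - 1)) (h k))"
      unfolding l' by (subst sum.atLeast_Suc_atMost) auto
    also have "(\<Sum>k=Suc 1..Suc l'. sm (cc (k - 1)) (h k)) = (\<Sum>j=1..l'. sm (cc j) (h (Suc j)))"
      by (subst sum.shift_bounds_cl_Suc_ivl) simp
    finally show ?thesis using c0 l' by simp
  qed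
  have B: "(\<Sum>j=1..l-1. sm (cc j) (h j)) = (\<Sum>k=1..l. sm (cc k) (h k))"
    using cl l' by simp
  have "(\<Sum>j=1..l-1. sm (cc j) (h (j+1) - h j)) = (\<Sum>j=1..l-1. sm (cc j) (h (j+1))) - (\<Sum>j=1..l-1. sm (cc j) (h j))"
    by (simp add: sum_subtractf scale_right_diff_distrib)
  also have "\<dots> = (\<Sum>k=1..l. sm (cc (k - 1)) (h k) - sm (cc k) (h k))"
    unfolding A B by (simp add: sum_subtractf)
  also have "\<dots> = (\<Sum>k=1..l. sm (2 * of_nat k - of_nat l - 1) (h k))"
  proof (rule sum.cong[OF refl])
    fix k assume k: "k \<in> {1..l}"
    then have "cc (k-1) - cc k = 2 * of_nat k - of_nat l - 1" using cc_diff by auto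
    then show "sm (cc (k - 1)) (h k) - sm (cc k) (h k) = sm (2 * of_nat k - of_nat l - 1) (h k)"
      by (simp add: scale_left_diff_distrib[symmetric])
  qed
  finally show ?thesis .
qed

lemma EF_HK:
  assumes l1: "1 \<le> l"
  shows "Eop (Fop x) - Fop (Eop x) = sm 2 (Kop x) - sm (of_nat l + 1) (Nop x)"
proof -
  have "Eop (Fop x) - Fop (Eop x) = (\<Sum>k=1..l. sm (2 * of_nat k - of_nat l - 1) (nop k x))"
    unfolding EF_comm using tele[OF l1, of "\<lambda>k. nop k x"] by simp
  also have "\<dots> = (\<Sum>k=1..l. sm 2 (sm (of_nat k) (nop k x)) - sm (of_nat l + 1) (nop k x))"
    by (rule sum.cong[OF refl]) (simp add: scale_left_diff_distrib algebra_simps)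
  also have "\<dots> = sm 2 (Kop x) - sm (of_nat l + 1) (Nop x)"
    unfolding Kop_def Nop_eq by (simp add: sum_subtractf scale_sum_right)
  finally show ?thesis .
qed

end


context ferm
begin

interpretation vp: vector_space_pair sm sm by unfold_locales

abbreviation "W m r \<equiv> Vsp_r sm l b b' m r"
abbreviation "V m \<equiv> Vsp sm l b b' m"

lemma lin_E: "Vector_Spaces.linear sm sm Eop"
proof -
  have "Eop = (\<lambda>x. \<Sum>k\<in>{1..l-1}. (b' (k+1) \<circ> b k) x)" using Eop_eq by auto
  moreover have "Vector_Spaces.linear sm sm (\<lambda>x. \<Sum>k\<in>{1..l-1}. (b' (k+1) \<circ> b k) x)"
  proof (rule vp.linear_compose_sum, intro ballI)
    fix k assume "k \<in> {1..l-1}"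
    then show "Vector_Spaces.linear sm sm (b' (k+1) \<circ> b k)"
      using idx Vector_Spaces.linear_compose[OF lin_b lin_b'] by blast
  qed
  ultimately show ?thesis by simp
qed

lemma lin_F: "Vector_Spaces.linear sm sm Fop"
proof -
  have "Fop = (\<lambda>x. \<Sum>k\<in>{1..l-1}. sm (cc k) ((b' k \<circ> b (k+1)) x))" using Fop_def by auto
  moreover have "Vector_Spaces.linear sm sm (\<lambda>x. \<Sum>k\<in>{1..l-1}. sm (cc k) ((b' k \<circ> b (k+1)) x))"
  proof (rule vp.linear_compose_sum, intro ballI)
    fix k assume "k \<in> {1..l-1}"
    then have "Vector_Spaces.linear sm sm (b' k \<circ> b (k+1))"
      using idx Vector_Spaces.linear_compose[OF lin_b lin_b'] by blast
    then show "Vector_Spaces.linear sm sm (\<lambda>x. sm (cc k) ((b' k \<circ> b (k+1)) x))"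
      by (rule vp.linear_compose_scale_right)
  qed
  ultimately show ?thesis by simp
qed

lemma lin_pow: "Vector_Spaces.linear sm sm T \<Longrightarrow> Vector_Spaces.linear sm sm (T^^n)"
proof (induction n)
  case 0
  show ?case using linear_id by (simp add: id_def)
next
  case (Suc n)
  then show ?case using Vector_Spaces.linear_compose[OF Suc.IH Suc.prems] by (simp add: o_def)
qed

definition "kap m r = (of_int r + (of_nat m ^ 2 + of_nat m) / 2 :: complex)"

lemma W_iff: "x \<in> W m r \<longleftrightarrow> Nop x = sm (of_nat m) x \<and> Kop x = sm (kap m r) x"
proof -
  interpret N: Vector_Spaces.linear sm sm Nop by (rule lin_Nop)
  have *: "Om x = Kop x - sm ((of_nat m ^ 2 + of_nat m) / 2) x" if "Nop x = sm (of_nat m) x"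
  proof -
    have "Nop (Nop x) + Nop x = sm (of_nat m ^ 2 + of_nat m) x"
      using that by (simp add: N.scale scale_left_distrib power2_eq_square)
    then show ?thesis unfolding Om_eq by simp
  qed
  show ?thesis
  proof
    assume "x \<in> W m r"
    then have a: "Nop x = sm (of_nat m) x" "Om x = sm (of_int r) x" unfolding Vsp_r_def by auto
    have "Kop x = Om x + sm ((of_nat m ^ 2 + of_nat m) / 2) x" using *[OF a(1)] by simp
    also have "\<dots> = sm (kap m r) x" unfolding a(2) kap_def by (simp add: scale_left_distrib)
    finally show "Nop x = sm (of_nat m) x \<and> Kop x = sm (kap m r) x" using a by simp
  next
    assume a: "Nop x = sm (of_nat m) x \<and> Kop x = sm (kap m r) x"
    have "Om x = sm (kap m r) x - sm ((of_nat m ^ 2 + of_nat m) / 2) x" using *[of] a by simp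
    also have "\<dots> = sm (of_int r) x" unfolding kap_def by (simp add: scale_left_diff_distrib[symmetric])
    finally show "x \<in> W m r" unfolding Vsp_r_def using a by simp
  qed
qed

lemma W_E: "x \<in> W m r \<Longrightarrow> Eop x \<in> W m (r + 1)"
proof -
  assume x: "x \<in> W m r"
  interpret E: Vector_Spaces.linear sm sm Eop by (rule lin_E)
  have a: "Nop x = sm (of_nat m) x" "Kop x = sm (kap m r) x" using x W_iff by auto
  have "Nop (Eop x) = sm (of_nat m) (Eop x)" unfolding Nop_E a(1) E.scale ..
  moreover have "Kop (Eop x) = sm (kap m (r+1)) (Eop x)"
    unfolding Kop_E a(2) E.scale kap_def by (simp add: scale_left_distrib algebra_simps)
  ultimately show ?thesis using W_iff by simp
qed

lemma W_F: "x \<in> W m r \<Longrightarrow> Fop x \<in> W m (r - 1)"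
proof -
  assume x: "x \<in> W m r"
  interpret F: Vector_Spaces.linear sm sm Fop by (rule lin_F)
  have a: "Nop x = sm (of_nat m) x" "Kop x = sm (kap m r) x" using x W_iff by auto
  have "Nop (Fop x) = sm (of_nat m) (Fop x)" unfolding Nop_F a(1) F.scale ..
  moreover have "Kop (Fop x) = sm (kap m (r-1)) (Fop x)"
    unfolding Kop_F a(2) F.scale kap_def by (simp add: scale_left_diff_distrib algebra_simps)
  ultimately show ?thesis using W_iff by simp
qed

lemma W_comm:
  assumes l1: "1 \<le> l" and x: "x \<in> W m r"
  shows "Eop (Fop x) - Fop (Eop x) = sm (of_int (2 * r - int m * (int l - int m))) x"
proof -
  have a: "Nop x = sm (of_nat m) x" "Kop x = sm (kap m r) x" using x W_iff by auto
  have "Eop (Fop x) - Fop (Eop x) = sm (2 * kap m r - (of_nat l + 1) * of_nat m) x"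
    unfolding EF_HK[OF l1] a by (simp add: scale_left_diff_distrib)
  also have "2 * kap m r - (of_nat l + 1) * of_nat m = (of_int (2 * r - int m * (int l - int m)) :: complex)"
    unfolding kap_def by (simp add: algebra_simps power2_eq_square)
  finally show ?thesis .
qed

lemma sub_W: "subspace (W m r)"
  unfolding subspace_def
proof (intro conjI ballI allI)
  show "0 \<in> W m r" by (simp add: inW co_zero)
next
  fix x y assume x: "x \<in> W m r" and y: "y \<in> W m r"
  show "x + y \<in> W m r" unfolding inW co_add
  proof (intro ballI impI)
    fix nu assume nu: "nu \<in> P" and ne: "co x nu + co y nu \<noteq> 0"
    then have "co x nu \<noteq> 0 \<or> co y nu \<noteq> 0" by auto
    then show "cnt nu = m \<and> om nu = of_int r" using x y nu inW by blast
  qed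
next
  fix c x assume x: "x \<in> W m r"
  show "sm c x \<in> W m r" unfolding inW co_scale
  proof (intro ballI impI)
    fix nu assume nu: "nu \<in> P" and ne: "c * co x nu \<noteq> 0"
    then have "co x nu \<noteq> 0" by auto
    then show "cnt nu = m \<and> om nu = of_int r" using x nu inW by blast
  qed
qed

lemma W_out:
  assumes "r < 0 \<or> r > int m * (int l - int m)" and x: "x \<in> W m r"
  shows "x = 0"
proof (rule eq_by_co)
  fix nu assume nu: "nu \<in> P"
  show "co x nu = co 0 nu"
  proof (rule ccontr)
    assume "co x nu \<noteq> co 0 nu"
    then have "co x nu \<noteq> 0" by (simp add: co_zero)
    then have c: "cnt nu = m" "om nu = of_int r" using x nu inW by auto
    obtain r' where r': "0 \<le> r'" "r' \<le> int m * (int l - int m)" "om nu = of_int r'"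
      using om_range[OF nu c(1)] by blast
    have "r = r'" using c(2) r'(3) by simp
    then show False using assms r' by auto
  qed
qed

lemma W_sub_V: "W m r \<subseteq> V m"
  unfolding Vsp_r_def Vsp_def by auto

end


context ferm
begin

abbreviation "NN m \<equiv> int m * (int l - int m)"

lemma ch_c: "(n::int) \<noteq> 0 \<Longrightarrow> (of_int n :: complex) \<noteq> 0" by simp

lemma inj_E:
  assumes l1: "1 \<le> l" and a: "2 * r + int k \<le> NN m" "x \<in> W m r" "(Eop^^k) x = 0"
  shows "x = 0"
proof -
  have Wneg: "\<And>r x. r < 0 \<Longrightarrow> x \<in> W m r \<Longrightarrow> x = 0" using W_out by blast
  show ?thesis
    by (rule sl2_inj[where e=Eop and f=Fop and W="W m" and N="NN m" and r=r and k=k and x=x,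
          OF lin_E lin_F W_E W_F Wneg W_comm[OF l1] ch_c a])
qed

lemma inj_F:
  assumes l1: "1 \<le> l" and a: "2 * (NN m - s) + int k \<le> NN m" "x \<in> W m s" "(Fop^^k) x = 0"
  shows "x = 0"
proof -
  let ?W = "\<lambda>r. W m (NN m - r)"
  have We: "\<And>r x. x \<in> ?W r \<Longrightarrow> Fop x \<in> ?W (r + 1)"
  proof -
    fix r x assume "x \<in> ?W r"
    then have "Fop x \<in> W m (NN m - r - 1)" by (rule W_F)
    moreover have "NN m - r - 1 = NN m - (r + 1)" by simp
    ultimately show "Fop x \<in> ?W (r + 1)" by simp
  qed
  have Wf: "\<And>r x. x \<in> ?W r \<Longrightarrow> Eop x \<in> ?W (r - 1)"
  proof -
    fix r x assume "x \<in> ?W r"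
    then have "Eop x \<in> W m (NN m - r + 1)" by (rule W_E)
    moreover have "NN m - r + 1 = NN m - (r - 1)" by simp
    ultimately show "Eop x \<in> ?W (r - 1)" by simp
  qed
  have Wneg: "\<And>r x. r < 0 \<Longrightarrow> x \<in> ?W r \<Longrightarrow> x = 0"
  proof -
    fix r x assume r: "r < 0" and x: "x \<in> ?W r"
    have "NN m - r < 0 \<or> NN m - r > NN m" using r by simp
    then show "x = 0" using W_out x by blast
  qed
  have comm: "\<And>r x. x \<in> ?W r \<Longrightarrow> Fop (Eop x) - Eop (Fop x) = sm (of_int (2 * r - NN m)) x"
  proof -
    fix r x assume x: "x \<in> ?W r"
    have "Eop (Fop x) - Fop (Eop x) = sm (of_int (2 * (NN m - r) - NN m)) x"
      using W_comm[OF l1 x] .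
    then have "Fop (Eop x) - Eop (Fop x) = - sm (of_int (2 * (NN m - r) - NN m)) x"
      by (metis minus_diff_eq)
    also have "\<dots> = sm (of_int (2 * r - NN m)) x"
      by (simp add: scale_minus_left[symmetric] algebra_simps)
    finally show "Fop (Eop x) - Eop (Fop x) = sm (of_int (2 * r - NN m)) x" .
  qed
  have a2: "x \<in> ?W (NN m - s)" using a(2) by simp
  show ?thesis
    by (rule sl2_inj[where e=Fop and f=Eop and W="?W" and N="NN m" and r="NN m - s" and k=k and x=x,
          OF lin_F lin_E We Wf Wneg comm ch_c a(1) a2 a(3)])
qed

lemma E_pow_W: "x \<in> W m r \<Longrightarrow> (Eop^^k) x \<in> W m (r + int k)"
proof (induction k)
  case (Suc k)
  have "Eop ((Eop^^k) x) \<in> W m (r + int k + 1)" using W_E[OF Suc.IH[OF Suc.prems]] .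
  moreover have "r + int k + 1 = r + int (Suc k)" by simp
  ultimately show ?case by (metis funpow.simps(2) o_apply)
qed simp

lemma F_pow_W: "x \<in> W m r \<Longrightarrow> (Fop^^k) x \<in> W m (r - int k)"
proof (induction k)
  case (Suc k)
  have "Fop ((Fop^^k) x) \<in> W m (r - int k - 1)" using W_F[OF Suc.IH[OF Suc.prems]] .
  moreover have "r - int k - 1 = r - int (Suc k)" by simp
  ultimately show ?case by (metis funpow.simps(2) o_apply)
qed simp

lemma span_W: "span (W m r) = W m r"
  using sub_W span_eq_iff by blast

interpretation fp: finite_dimensional_vector_space_pair_1 sm Bs sm by unfold_locales

lemma dim_img_inj:
  assumes lT: "Vector_Spaces.linear sm sm T" and inj: "\<And>x. x \<in> S \<Longrightarrow> T x = 0 \<Longrightarrow> x = 0"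
    and S: "subspace S"
  shows "dim (T ` S) = dim S"
proof -
  interpret T: Vector_Spaces.linear sm sm T by fact
  have sp: "span S = S" using S span_eq_iff by blast
  have "inj_on T S" using T.inj_on_iff_eq_0[OF S] inj by blast
  then show ?thesis using fp.dim_image_eq[OF lT, of S] sp by simp
qed

lemma sub_img: "Vector_Spaces.linear sm sm T \<Longrightarrow> subspace S \<Longrightarrow> subspace (T ` S)"
proof -
  assume lT: "Vector_Spaces.linear sm sm T" and S: "subspace S"
  interpret T: Vector_Spaces.linear sm sm T by fact
  show ?thesis using T.subspace_image[OF S] .
qed

lemma mid_bij:
  assumes l1: "1 \<le> l" and r: "0 \<le> r" "2 * r \<le> NN m"
  shows "(Eop^^nat (NN m - 2 * r)) ` W m r = W m (NN m - r)"
    and "dim (W m r) = dim (W m (NN m - r))"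
proof -
  let ?k = "nat (NN m - 2 * r)"
  have kk: "int ?k = NN m - 2 * r" using r by simp
  have eq1: "r + int ?k = NN m - r" using kk by simp
  have sub1: "(Eop^^?k) ` W m r \<subseteq> W m (NN m - r)"
  proof
    fix y assume "y \<in> (Eop^^?k) ` W m r"
    then obtain x where x: "x \<in> W m r" "y = (Eop^^?k) x" by blast
    have "(Eop^^?k) x \<in> W m (r + int ?k)" by (rule E_pow_W[OF x(1)])
    then show "y \<in> W m (NN m - r)" using x(2) eq1 by simp
  qed
  have d1: "dim ((Eop^^?k) ` W m r) = dim (W m r)"
  proof (rule dim_img_inj[OF lin_pow[OF lin_E] _ sub_W])
    fix x assume x1: "x \<in> W m r" and x2: "(Eop^^?k) x = 0"
    have c: "2 * r + int ?k \<le> NN m" using kk by simp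
    show "x = 0" by (rule inj_E[OF l1 c x1 x2])
  qed
  have eq2: "NN m - r - int ?k = r" using kk by simp
  have sub2: "(Fop^^?k) ` W m (NN m - r) \<subseteq> W m r"
  proof
    fix y assume "y \<in> (Fop^^?k) ` W m (NN m - r)"
    then obtain x where x: "x \<in> W m (NN m - r)" "y = (Fop^^?k) x" by blast
    have "(Fop^^?k) x \<in> W m (NN m - r - int ?k)" by (rule F_pow_W[OF x(1)])
    then show "y \<in> W m r" using x(2) eq2 by simp
  qed
  have d2: "dim ((Fop^^?k) ` W m (NN m - r)) = dim (W m (NN m - r))"
  proof (rule dim_img_inj[OF lin_pow[OF lin_F] _ sub_W])
    fix x assume x1: "x \<in> W m (NN m - r)" and x2: "(Fop^^?k) x = 0"
    have c: "2 * (NN m - (NN m - r)) + int ?k \<le> NN m" using kk by simp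
    show "x = 0" by (rule inj_F[OF l1 c x1 x2])
  qed
  have le1: "dim (W m r) \<le> dim (W m (NN m - r))" using d1 fdv.dim_subset[OF sub1] by simp
  have le2: "dim (W m (NN m - r)) \<le> dim (W m r)" using d2 fdv.dim_subset[OF sub2] by simp
  show "dim (W m r) = dim (W m (NN m - r))" using le1 le2 by simp
  show "(Eop^^?k) ` W m r = W m (NN m - r)"
    by (rule fdv.subspace_dim_equal[OF sub_img[OF lin_pow[OF lin_E] sub_W] sub_W sub1]) (use d1 le2 in simp)
qed

lemma W_zero: "r < 0 \<or> r > NN m \<Longrightarrow> W m r = {0}"
  using W_out[of r m] sub_W[of m r] subspace_0 by blast

lemma arith1: "(N::int) \<le> 2 * r + k \<Longrightarrow> r + k > N \<or> r < 0 \<Longrightarrow> r + k > N"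
  by linarith

lemma arith2: "(N::int) \<le> 2 * r + k \<Longrightarrow> \<not> (r + k > N \<or> r < 0) \<Longrightarrow> 0 \<le> k \<Longrightarrow>
   0 \<le> N - (r + k) \<and> N - (r + k) \<le> r \<and> 2 * (N - (r + k)) \<le> N"
  by auto

lemma surj_E:
  assumes l1: "1 \<le> l" and a: "NN m \<le> 2 * r + int k"
  shows "(Eop^^k) ` W m r = W m (r + int k)"
proof -
  have subimg: "(Eop^^k) ` W m r \<subseteq> W m (r + int k)"
  proof (rule image_subsetI)
    fix x assume "x \<in> W m r"
    then show "(Eop^^k) x \<in> W m (r + int k)" by (rule E_pow_W)
  qed
  have z0: "(Eop^^k) 0 = 0" using pow0[OF lin_E] .
  show ?thesis
  proof (cases "r + int k > NN m \<or> r < 0")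
    case True
    have gt: "r + int k > NN m"
      by (rule arith1[OF a True])
    have W0: "W m (r + int k) = {0}"
      by (intro W_zero disjI2) (rule gt)
    have "0 \<in> W m r" using subspace_0[OF sub_W] .
    then have "(Eop^^k) 0 \<in> (Eop^^k) ` W m r" by (rule imageI)
    then have h0: "0 \<in> (Eop^^k) ` W m r" unfolding z0 .
    show ?thesis
    proof (rule equalityI[OF subimg])
      show "W m (r + int k) \<subseteq> (Eop^^k) ` W m r" unfolding W0 using h0 by simp
    qed
  next
    case False
    define t where "t = r + int k"
    define s0 where "s0 = NN m - t"
    have s0: "0 \<le> s0" "s0 \<le> r" "2 * s0 \<le> NN m" using arith2[OF a False of_nat_0_le_iff] unfolding s0_def t_def by auto
    have mb: "(Eop^^nat (NN m - 2 * s0)) ` W m s0 = W m (NN m - s0)" using mid_bij(1)[OF l1 s0(1) s0(3)] .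
    have ns: "NN m - s0 = t" unfolding s0_def by simp
    have e0: "NN m - 2 * s0 = int k + (r - s0)" unfolding s0_def t_def by simp
    have e: "nat (NN m - 2 * s0) = k + nat (r - s0)" unfolding e0 using s0(2) by (simp add: nat_add_distrib)
    have "(Eop^^nat (NN m - 2 * s0)) = (Eop^^k) \<circ> (Eop^^nat (r - s0))" unfolding e funpow_add ..
    then have "W m t = (Eop^^k) ` ((Eop^^nat (r - s0)) ` W m s0)" using mb unfolding ns
      by (simp add: image_comp)
    moreover have "(Eop^^nat (r - s0)) ` W m s0 \<subseteq> W m r"
    proof
      fix y assume "y \<in> (Eop^^nat (r - s0)) ` W m s0"
      then obtain x where x: "x \<in> W m s0" "y = (Eop^^nat (r - s0)) x" by blast
      have "(Eop^^nat (r - s0)) x \<in> W m (s0 + int (nat (r - s0)))" by (rule E_pow_W[OF x(1)])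
      moreover have "s0 + int (nat (r - s0)) = r" using s0 by simp
      ultimately show "y \<in> W m r" using x(2) by simp
    qed
    ultimately have "W m t \<subseteq> (Eop^^k) ` W m r" by blast
    then show ?thesis using subimg unfolding t_def by blast
  qed
qed

end


context ferm
begin

definition "Pr m r x = (\<Sum>nu\<in>P. sm (if cnt nu = m \<and> om nu = of_int r then co x nu else 0) (vv nu))"

lemma Pr_W: "Pr m r x \<in> W m r"
  unfolding inW Pr_def using co_comb by (auto split: if_splits)

lemma Pr_sum:
  assumes x: "x \<in> V m"
  shows "x = (\<Sum>r\<in>{0..NN m}. Pr m r x)"
proof (rule eq_by_co)
  fix nu assume nu: "nu \<in> P"
  have cP: "co (Pr m r x) nu = (if cnt nu = m \<and> om nu = of_int r then co x nu else 0)" for r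
    unfolding Pr_def by (rule co_comb[OF nu])
  have "co (\<Sum>r\<in>{0..NN m}. Pr m r x) nu = (\<Sum>r\<in>{0..NN m}. co (Pr m r x) nu)" by (rule co_sum)
  also have "\<dots> = (\<Sum>r\<in>{0..NN m}. if cnt nu = m \<and> om nu = of_int r then co x nu else 0)"
    unfolding cP ..
  also have "\<dots> = co x nu"
  proof (cases "co x nu = 0")
    case True then show ?thesis by (simp add: if_distrib[of "\<lambda>_. _"] cong: if_cong)
  next
    case False
    then have c: "cnt nu = m" using x nu inV by blast
    obtain r0 where r0: "0 \<le> r0" "r0 \<le> NN m" "om nu = of_int r0" using om_range[OF nu c] by blast
    have "(\<Sum>r\<in>{0..NN m}. if cnt nu = m \<and> om nu = of_int r then co x nu else 0)
        = (\<Sum>r\<in>{0..NN m}. if r = r0 then co x nu else 0)"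
      by (rule sum.cong[OF refl]) (use c r0(3) in auto)
    also have "\<dots> = co x nu" using r0 by (simp add: sum.delta')
    finally show ?thesis .
  qed
  finally show "co x nu = co (\<Sum>r\<in>{0..NN m}. Pr m r x) nu" by simp
qed

lemma W_indep:
  assumes fin: "finite I" and g: "inj_on g I" and u: "\<forall>r\<in>I. u r \<in> W m (g r)"
    and s: "(\<Sum>r\<in>I. u r) = 0"
  shows "\<forall>r\<in>I. u r = 0"
proof
  fix r0 assume r0: "r0 \<in> I"
  show "u r0 = 0"
  proof (rule eq_by_co)
    fix nu assume nu: "nu \<in> P"
    show "co (u r0) nu = co 0 nu"
    proof (rule ccontr)
      assume "co (u r0) nu \<noteq> co 0 nu"
      then have ne: "co (u r0) nu \<noteq> 0" by (simp add: co_zero)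
      then have om0: "om nu = of_int (g r0)" using u r0 nu inW by blast
      have others: "co (u r) nu = 0" if r: "r \<in> I" "r \<noteq> r0" for r
      proof (rule ccontr)
        assume "co (u r) nu \<noteq> 0"
        then have "om nu = of_int (g r)" using u r nu inW by blast
        then have "g r = g r0" using om0 by simp
        then show False using g r r0 by (meson inj_on_def)
      qed
      have "0 = co (\<Sum>r\<in>I. u r) nu" using s by (simp add: co_zero)
      also have "\<dots> = (\<Sum>r\<in>I. co (u r) nu)" by (rule co_sum)
      also have "\<dots> = (\<Sum>r\<in>I. if r = r0 then co (u r0) nu else 0)"
        by (rule sum.cong[OF refl]) (use others in auto)
      also have "\<dots> = co (u r0) nu" using r0 fin by (simp add: sum.delta')
      finally show False using ne by simp
    qed
  qed
qed

lemma sub_V: "subspace (V m)"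
  unfolding subspace_def
proof (intro conjI ballI allI)
  show "0 \<in> V m" by (simp add: inV co_zero)
next
  fix x y assume x: "x \<in> V m" and y: "y \<in> V m"
  show "x + y \<in> V m" unfolding inV co_add
  proof (intro ballI impI)
    fix nu assume nu: "nu \<in> P" and ne: "co x nu + co y nu \<noteq> 0"
    then have "co x nu \<noteq> 0 \<or> co y nu \<noteq> 0" by auto
    then show "cnt nu = m" using x y nu inV by blast
  qed
next
  fix c x assume x: "x \<in> V m"
  show "sm c x \<in> V m" unfolding inV co_scale
  proof (intro ballI impI)
    fix nu assume nu: "nu \<in> P" and ne: "c * co x nu \<noteq> 0"
    then have "co x nu \<noteq> 0" by auto
    then show "cnt nu = m" using x nu inV by blast
  qed
qed

lemma E_V: "x \<in> V m \<Longrightarrow> Eop x \<in> V m"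
proof -
  assume x: "x \<in> V m"
  interpret E: Vector_Spaces.linear sm sm Eop by (rule lin_E)
  have "Nop x = sm (of_nat m) x" using x unfolding Vsp_def by simp
  then have "Nop (Eop x) = sm (of_nat m) (Eop x)" unfolding Nop_E by (simp add: E.scale)
  then show ?thesis unfolding Vsp_def by simp
qed

lemma E_pow_V: "x \<in> V m \<Longrightarrow> (Eop^^d) x \<in> V m"
  by (induction d) (auto simp: E_V)

lemma restr_pow: "x \<in> V m \<Longrightarrow> (restr_op (V m) Eop ^^ d) x = (Eop^^d) x"
proof (induction d)
  case (Suc d)
  have "(restr_op (V m) Eop ^^ Suc d) x = restr_op (V m) Eop ((Eop^^d) x)" using Suc by simp
  also have "\<dots> = Eop ((Eop^^d) x)" unfolding restr_op_def using E_pow_V[OF Suc.prems] by simp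
  finally show ?case by simp
qed simp

lemma ker_dsum:
  "ker_pow (V m) Eop d = fdv.dsum {0..NN m} (\<lambda>r. {x \<in> W m r. (Eop^^d) x = 0})"
proof (intro set_eqI iffI)
  interpret Ed: Vector_Spaces.linear sm sm "Eop^^d" by (rule lin_pow[OF lin_E])
  fix x assume "x \<in> ker_pow (V m) Eop d"
  then have x: "x \<in> V m" "(Eop^^d) x = 0" unfolding ker_pow_def using restr_pow by auto
  have xs: "x = (\<Sum>r\<in>{0..NN m}. Pr m r x)" using Pr_sum[OF x(1)] .
  have e1: "(Eop^^d) (\<Sum>r\<in>{0..NN m}. Pr m r x) = (\<Sum>r\<in>{0..NN m}. (Eop^^d) (Pr m r x))" by (rule Ed.sum)
  have h2: "(\<Sum>r\<in>{0..NN m}. (Eop^^d) (Pr m r x)) = 0" using x(2) xs[symmetric] e1 by simp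
  have h1: "\<forall>r\<in>{0..NN m}. (Eop^^d) (Pr m r x) \<in> W m (r + int d)"
  proof
    fix r show "(Eop^^d) (Pr m r x) \<in> W m (r + int d)" by (rule E_pow_W[OF Pr_W])
  qed
  have inj: "inj_on (\<lambda>r. r + int d) {0..NN m}" by (simp add: inj_on_def)
  have fin: "finite {0..NN m}" by simp
  have "\<forall>r\<in>{0..NN m}. (Eop^^d) (Pr m r x) = 0"
    by (rule W_indep[OF fin inj h1 h2])
  then have "\<forall>r\<in>{0..NN m}. Pr m r x \<in> {x \<in> W m r. (Eop^^d) x = 0}" using Pr_W by simp
  then show "x \<in> fdv.dsum {0..NN m} (\<lambda>r. {x \<in> W m r. (Eop^^d) x = 0})"
    unfolding fdv.dsum_def using xs by blast
next
  interpret Ed: Vector_Spaces.linear sm sm "Eop^^d" by (rule lin_pow[OF lin_E])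
  fix x assume "x \<in> fdv.dsum {0..NN m} (\<lambda>r. {x \<in> W m r. (Eop^^d) x = 0})"
  then obtain u where u: "x = (\<Sum>r\<in>{0..NN m}. u r)" "\<forall>r\<in>{0..NN m}. u r \<in> W m r \<and> (Eop^^d) (u r) = 0"
    unfolding fdv.dsum_def by blast
  have xV: "x \<in> V m" unfolding u(1) by (rule subspace_sum[OF sub_V]) (use u(2) W_sub_V in blast)
  have "(Eop^^d) x = 0" unfolding u(1) Ed.sum using u(2) by simp
  then show "x \<in> ker_pow (V m) Eop d" unfolding ker_pow_def using restr_pow[OF xV] xV by simp
qed

lemma sub_kerW: "subspace {x \<in> W m r. (Eop^^d) x = 0}"
proof -
  interpret Ed: Vector_Spaces.linear sm sm "Eop^^d" by (rule lin_pow[OF lin_E])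
  have "{x \<in> W m r. (Eop^^d) x = 0} = W m r \<inter> {x. (Eop^^d) x = 0}" by auto
  then show ?thesis using subspace_inter[OF sub_W Ed.subspace_kernel] by simp
qed

lemma dim_ker:
  "dim (ker_pow (V m) Eop d) = (\<Sum>r\<in>{0..NN m}. dim {x \<in> W m r. (Eop^^d) x = 0})"
proof -
  have "dim (fdv.dsum {0..NN m} (\<lambda>r. {x \<in> W m r. (Eop^^d) x = 0})) = (\<Sum>r\<in>{0..NN m}. dim {x \<in> W m r. (Eop^^d) x = 0})"
  proof (rule fdv.dim_dsum)
    show "finite {0..NN m}" by simp
    show "\<forall>i\<in>{0..NN m}. subspace {x \<in> W m i. (Eop^^d) x = 0}" using sub_kerW by blast
    fix u assume "\<forall>i\<in>{0..NN m}. u i \<in> {x \<in> W m i. (Eop^^d) x = 0}" "(\<Sum>i\<in>{0..NN m}. u i) = 0"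
    then have h1: "\<forall>i\<in>{0..NN m}. u i \<in> W m i" and h2: "(\<Sum>i\<in>{0..NN m}. u i) = 0" by blast+
    have fin: "finite {0..NN m}" by simp
    have inj: "inj_on (\<lambda>r. r) {0..NN m}" by (simp add: inj_on_def)
    show "\<forall>i\<in>{0..NN m}. u i = 0" by (rule W_indep[OF fin inj h1 h2])
  qed
  then show ?thesis unfolding ker_dsum .
qed

end


lemma single_sum:
  fixes w :: "int \<Rightarrow> int" and N c :: int
  assumes wz: "\<And>r. r < 0 \<or> r > N \<Longrightarrow> w r = 0"
  shows "(\<Sum>r\<in>{0..N}. if 2 * r = c then w r else 0) = (if even c then w (c div 2) else 0)"
proof (cases "even c")
  case True
  have "(\<Sum>r\<in>{0..N}. if 2 * r = c then w r else 0) = (\<Sum>r\<in>{0..N}. if r = c div 2 then w r else 0)"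
    by (rule sum.cong[OF refl]) (use True in auto)
  also have "\<dots> = (if c div 2 \<in> {0..N} then w (c div 2) else 0)" by (simp add: sum.delta')
  also have "\<dots> = w (c div 2)" using wz[of "c div 2"] by auto
  finally show ?thesis using True by simp
next
  case False
  have "(\<Sum>r\<in>{0..N}. if 2 * r = c then w r else 0) = (\<Sum>r\<in>{0..N}. 0)"
    by (rule sum.cong[OF refl]) (use False in auto)
  then show ?thesis using False by simp
qed

lemma shift_sum:
  fixes w :: "int \<Rightarrow> int" and N D :: int
  assumes wz: "\<And>r. r < 0 \<or> r > N \<Longrightarrow> w r = 0" and D: "0 \<le> D"
  shows "(\<Sum>r\<in>{0..N}. if N < 2 * r + D then w (r + D) else 0) = (\<Sum>s\<in>{0..N}. if N + D < 2 * s then w s else 0)"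
proof -
  define f where "f s = (if N + D < 2 * s then w s else 0)" for s
  have "(\<Sum>r\<in>{0..N}. if N < 2 * r + D then w (r + D) else 0) = (\<Sum>r\<in>{0..N}. f (r + D))"
    unfolding f_def by (rule sum.cong[OF refl]) auto
  also have "\<dots> = (\<Sum>s\<in>(\<lambda>r. r + D) ` {0..N}. f s)"
    by (rule sum.reindex[symmetric, unfolded o_def]) (simp add: inj_on_def)
  also have "(\<lambda>r. r + D) ` {0..N} = {D..N + D}" by simp
  also have "(\<Sum>s\<in>{D..N + D}. f s) = (\<Sum>s\<in>{0..N + D}. f s)"
    by (rule sum.mono_neutral_left) (use D wz in \<open>auto simp: f_def\<close>)
  also have "\<dots> = (\<Sum>s\<in>{0..N}. f s)"
    by (rule sum.mono_neutral_right) (use D wz in \<open>auto simp: f_def\<close>)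
  finally show ?thesis unfolding f_def .
qed

lemma final_arith:
  fixes w :: "int \<Rightarrow> int" and N D :: int
  assumes wz: "\<And>r. r < 0 \<or> r > N \<Longrightarrow> w r = 0" and ws: "\<And>r. w r = w (N - r)" and D: "1 \<le> D"
  shows "(\<Sum>r\<in>{0..N}. if N < 2 * r + D then w r - w (r + D) else 0)
       - (\<Sum>r\<in>{0..N}. if N < 2 * r + (D - 1) then w r - w (r + (D - 1)) else 0)
       = w ((N - (D - 1)) div 2)"
proof -
  define T where "T E = (\<Sum>r\<in>{0..N}. if N < 2 * r + E then w r else 0)" for E
  define U where "U E = (\<Sum>s\<in>{0..N}. if N + E < 2 * s then w s else 0)" for E
  have split: "(\<Sum>r\<in>{0..N}. if N < 2 * r + E then w r - w (r + E) else 0) = T E - U E" if "0 \<le> E" for E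
  proof -
    have "(\<Sum>r\<in>{0..N}. if N < 2 * r + E then w r - w (r + E) else 0)
      = (\<Sum>r\<in>{0..N}. (if N < 2 * r + E then w r else 0) - (if N < 2 * r + E then w (r + E) else 0))"
      by (rule sum.cong[OF refl]) auto
    also have "\<dots> = T E - (\<Sum>r\<in>{0..N}. if N < 2 * r + E then w (r + E) else 0)"
      unfolding T_def by (simp add: sum_subtractf)
    also have "(\<Sum>r\<in>{0..N}. if N < 2 * r + E then w (r + E) else 0) = U E"
      unfolding U_def by (rule shift_sum[OF wz that])
    finally show ?thesis .
  qed
  have dT: "T D - T (D - 1) = (if even (N + 1 - D) then w ((N + 1 - D) div 2) else 0)"
  proof -
    have "T D - T (D - 1) = (\<Sum>r\<in>{0..N}. if 2 * r = N + 1 - D then w r else 0)"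
      unfolding T_def sum_subtractf[symmetric] by (rule sum.cong[OF refl]) auto
    then show ?thesis using single_sum[OF wz] by simp
  qed
  have dU: "U D - U (D - 1) = - (if even (N + D) then w ((N + D) div 2) else 0)"
  proof -
    have "U D - U (D - 1) = - (\<Sum>r\<in>{0..N}. if 2 * r = N + D then w r else 0)"
      unfolding U_def sum_subtractf[symmetric] sum_negf[symmetric] by (rule sum.cong[OF refl]) auto
    then show ?thesis using single_sum[OF wz] by simp
  qed
  have "(\<Sum>r\<in>{0..N}. if N < 2 * r + D then w r - w (r + D) else 0)
       - (\<Sum>r\<in>{0..N}. if N < 2 * r + (D - 1) then w r - w (r + (D - 1)) else 0)
       = (T D - T (D - 1)) - (U D - U (D - 1))"
    using split[of D] split[of "D - 1"] D by simp
  also have "\<dots> = (if even (N + 1 - D) then w ((N + 1 - D) div 2) else 0) + (if even (N + D) then w ((N + D) div 2) else 0)"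
    unfolding dT dU by simp
  also have "\<dots> = w ((N - (D - 1)) div 2)"
  proof (cases "even (N + 1 - D)")
    case True
    then have od: "odd (N + D)" by presburger
    have e: "N - (D - 1) = N + 1 - D" by simp
    show ?thesis unfolding e using True od by (simp only: if_True if_False add_0_right)
  next
    case False
    then have ev: "even (N + D)" by presburger
    have "w ((N + D) div 2) = w (N - (N + D) div 2)" by (rule ws)
    moreover have "N - (N + D) div 2 = (N - (D - 1)) div 2" using ev by presburger
    ultimately show ?thesis using False ev by simp
  qed
  finally show ?thesis .
qed


context ferm
begin

lemma dim_zero_set: "dim {0::'v} = 0"
  using fdv.dim_singleton by simp

lemma kd_low:
  assumes l1: "1 \<le> l" and c: "2 * r + int d \<le> NN m"
  shows "dim {x \<in> W m r. (Eop^^d) x = 0} = 0"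
proof -
  have "{x \<in> W m r. (Eop^^d) x = 0} = {0}"
  proof
    show "{x \<in> W m r. (Eop^^d) x = 0} \<subseteq> {0}"
    proof
      fix x assume "x \<in> {x \<in> W m r. (Eop^^d) x = 0}"
      then have x: "x \<in> W m r" "(Eop^^d) x = 0" by auto
      show "x \<in> {0}" using inj_E[OF l1 c x] by simp
    qed
    show "{0} \<subseteq> {x \<in> W m r. (Eop^^d) x = 0}"
      using subspace_0[OF sub_W, of m r] pow0[OF lin_E, of d] by simp
  qed
  then show ?thesis using dim_zero_set by simp
qed

lemma kd_high:
  assumes l1: "1 \<le> l" and c: "NN m < 2 * r + int d"
  shows "dim {x \<in> W m r. (Eop^^d) x = 0} + dim (W m (r + int d)) = dim (W m r)"
proof -
  have "dim {x \<in> W m r. (Eop^^d) x = 0} + dim ((Eop^^d) ` W m r) = dim (W m r)"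
    by (rule fdv.rank_nullity[OF lin_pow[OF lin_E] sub_W])
  moreover have "(Eop^^d) ` W m r = W m (r + int d)" by (rule surj_E[OF l1]) (use c in simp)
  ultimately show ?thesis by simp
qed

definition "wd m r = int (dim (W m r))"

lemma kd_int:
  assumes l1: "1 \<le> l"
  shows "int (dim {x \<in> W m r. (Eop^^d) x = 0}) = (if NN m < 2 * r + int d then wd m r - wd m (r + int d) else 0)"
proof (cases "NN m < 2 * r + int d")
  case True
  then show ?thesis using kd_high[OF l1 True] unfolding wd_def by simp
next
  case False
  then show ?thesis using kd_low[OF l1, of r d m] by simp
qed

lemma wd_zero: "r < 0 \<or> r > NN m \<Longrightarrow> wd m r = 0"
  unfolding wd_def using W_zero[of r m] dim_zero_set by simp

lemma wd_sym:
  assumes l1: "1 \<le> l"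
  shows "wd m r = wd m (NN m - r)"
proof (cases "r < 0 \<or> r > NN m")
  case True
  then have "NN m - r < 0 \<or> NN m - r > NN m" by auto
  then show ?thesis using wd_zero True by metis
next
  case False
  show ?thesis
  proof (cases "2 * r \<le> NN m")
    case True
    then show ?thesis unfolding wd_def using mid_bij(2)[OF l1 _ True] False by simp
  next
    case F2: False
    have "0 \<le> NN m - r" "2 * (NN m - r) \<le> NN m" using False F2 by auto
    then have "dim (W m (NN m - r)) = dim (W m (NN m - (NN m - r)))" using mid_bij(2)[OF l1] by blast
    then show ?thesis unfolding wd_def by simp
  qed
qed

lemma main:
  assumes l1: "1 \<le> l" and d: "1 \<le> d"
  shows "int (dim (ker_pow (V m) Eop d)) - int (dim (ker_pow (V m) Eop (d - 1)))
     = wd m ((NN m - (int d - 1)) div 2)"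
proof -
  have G: "int (dim (ker_pow (V m) Eop e)) = (\<Sum>r\<in>{0..NN m}. if NN m < 2 * r + int e then wd m r - wd m (r + int e) else 0)" for e
    unfolding dim_ker of_nat_sum using kd_int[OF l1] by simp
  have e1: "int (d - 1) = int d - 1" using d by simp
  have "int (dim (ker_pow (V m) Eop d)) - int (dim (ker_pow (V m) Eop (d - 1)))
      = (\<Sum>r\<in>{0..NN m}. if NN m < 2 * r + int d then wd m r - wd m (r + int d) else 0)
      - (\<Sum>r\<in>{0..NN m}. if NN m < 2 * r + (int d - 1) then wd m r - wd m (r + (int d - 1)) else 0)"
    unfolding G e1 ..
  also have "\<dots> = wd m ((NN m - (int d - 1)) div 2)"
    by (rule final_arith) (use wd_zero wd_sym[OF l1] d in auto)
  finally show ?thesis .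
qed

end

theorem theorem2:
  fixes sm :: "complex \<Rightarrow> 'v::ab_group_add \<Rightarrow> 'v"
    and b b' :: "nat \<Rightarrow> 'v \<Rightarrow> 'v" and right :: 'v
    and l m d :: nat
  assumes "fermion_system sm l b b' right"
    and "l \<ge> 1" and "m \<le> l" and "d \<ge> 1"
  shows "int (vector_space.dim sm (ker_pow (Vsp sm l b b' m) (Mop l b b') d))
       - int (vector_space.dim sm (ker_pow (Vsp sm l b b' m) (Mop l b b') (d - 1)))
       = int (vector_space.dim sm
           (Vsp_r sm l b b' m ((int m * (int l - int m) - (int d - 1)) div 2)))"
proof -
  interpret ferm sm l b b' right by unfold_locales (rule assms(1))
  show ?thesis using main[OF assms(2) assms(4), of m] unfolding wd_def .
qed

end
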